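(* Let $H$ be a balanced subgroup of $PL_o(I)$ whose only orbital is $A=(a,b)$, and let $\phi:H\to\mathbf{R}\times\mathbf{R}$ be $h\mapsto(\ln h'_+(a),\ln h'_-(b))$, where $h'_+(a)$ is the right derivative of $h$ at $a$ and $h'_-(b)$ the left derivative at $b$. Then $\phi$ is a homomorphism and its image $\phi(H)$ is either trivial or isomorphic to $\mathbf{Z}$.
   Context: $PL_o(I)$ is the group of orientation-preserving piecewise-linear homeomorphisms of $I=[0,1]$ with finitely many breaks in slope, acting on the right. The support of $h$ is the open set of points moved by $h$; an orbital of an element is a connected component of its support; an orbital of a subgroup $G$ is a connected component of the union of the supports of its elements. If $A$ is an orbital of a subgroup $G$ and $h\in G$, then $h$ realizes an end $e$ of $A$ if some orbital of $h$ is contained in $A$ and has $e$ as an endpoint. A group $H\le PL_o(I)$ is balanced if for every subgroup $G\le H$ and every orbital $A$ of $G$, every element of $G$ which realizes one end of $A$ also realizes the other end of $A$. *)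

theory Defs
  imports "HOL-Analysis.Analysis"
begin

text \<open>Elements of PL_o(I) are represented as functions real => real that are the
identity outside [0,1]; the right action means the product f*g is "g o f".\<close>

definition PLo :: "(real \<Rightarrow> real) \<Rightarrow> bool" where
  "PLo f \<longleftrightarrow>
     bij_betw f {0..1} {0..1} \<and> strict_mono_on {0..1} f \<and> continuous_on {0..1} f \<and>
     (\<forall>x. x \<notin> {0..1} \<longrightarrow> f x = x) \<and>
     (\<exists>S. finite S \<and>
        (\<forall>u v. u < v \<and> {u..v} \<subseteq> {0..1} \<and> {u<..<v} \<inter> S = {} \<longrightarrow>
           (\<exists>m c. \<forall>x\<in>{u..v}. f x = m * x + c)))"

definition PL_subgroup :: "(real \<Rightarrow> real) set \<Rightarrow> bool" where
  "PL_subgroup G \<longleftrightarrow> G \<subseteq> Collect PLo \<and> id \<in> G \<and>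
     (\<forall>f\<in>G. \<forall>g\<in>G. g \<circ> f \<in> G) \<and> (\<forall>f\<in>G. inv f \<in> G)"

definition supp :: "(real \<Rightarrow> real) \<Rightarrow> real set" where
  "supp h = {x\<in>{0..1}. h x \<noteq> x}"

definition elem_orbitals :: "(real \<Rightarrow> real) \<Rightarrow> real set set" where
  "elem_orbitals h = {connected_component_set (supp h) x | x. x \<in> supp h}"

definition group_orbitals :: "(real \<Rightarrow> real) set \<Rightarrow> real set set" where
  "group_orbitals G = {connected_component_set (\<Union>h\<in>G. supp h) x | x. x \<in> (\<Union>h\<in>G. supp h)}"

definition realizes :: "(real \<Rightarrow> real) \<Rightarrow> real set \<Rightarrow> real \<Rightarrow> bool" where
  "realizes h A e \<longleftrightarrow> (\<exists>B\<in>elem_orbitals h. B \<subseteq> A \<and> (e = Inf B \<or> e = Sup B))"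

definition balanced :: "(real \<Rightarrow> real) set \<Rightarrow> bool" where
  "balanced H \<longleftrightarrow> (\<forall>G. PL_subgroup G \<and> G \<subseteq> H \<longrightarrow>
     (\<forall>A\<in>group_orbitals G. \<forall>g\<in>G. realizes g A (Inf A) \<longleftrightarrow> realizes g A (Sup A)))"

definition right_deriv :: "(real \<Rightarrow> real) \<Rightarrow> real \<Rightarrow> real" where
  "right_deriv h a = (THE d. (h has_real_derivative d) (at a within {a..}))"

definition left_deriv :: "(real \<Rightarrow> real) \<Rightarrow> real \<Rightarrow> real" where
  "left_deriv h b = (THE d. (h has_real_derivative d) (at b within {..b}))"

end

theory Submission
  imports Defs
begin


section \<open>Basic facts on PLo\<close>

lemma PLo_in01: "PLo h \<Longrightarrow> x \<in> {0..1} \<Longrightarrow> h x \<in> {0..1}"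
  unfolding PLo_def by (meson bij_betw_apply)

lemma PLo_out: "PLo h \<Longrightarrow> x \<notin> {0..1} \<Longrightarrow> h x = x"
  unfolding PLo_def by blast

lemma PLo_smono: "PLo h \<Longrightarrow> x \<in> {0..1} \<Longrightarrow> y \<in> {0..1} \<Longrightarrow> x < y \<Longrightarrow> h x < h y"
  unfolding PLo_def strict_mono_on_def by blast

lemma PLo_0: assumes "PLo h" shows "h 0 = 0"
proof -
  have "h ` {0..1} = {0..1}" using assms unfolding PLo_def bij_betw_def by blast
  then obtain z where z: "z \<in> {0..1}" "h z = 0" by (metis atLeastAtMost_iff image_iff order_refl zero_le_one)
  show ?thesis
  proof (cases "z = 0")
    case True then show ?thesis using z by simp
  next
    case False
    then have "h 0 < h z" using PLo_smono[OF assms, of 0 z] z by auto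
    moreover have "h 0 \<in> {0..1}" using PLo_in01[OF assms] by simp
    ultimately show ?thesis using z by simp
  qed
qed

lemma PLo_1: assumes "PLo h" shows "h 1 = 1"
proof -
  have "h ` {0..1} = {0..1}" using assms unfolding PLo_def bij_betw_def by blast
  then obtain z where z: "z \<in> {0..1}" "h z = 1" by (metis atLeastAtMost_iff image_iff order_refl zero_le_one)
  show ?thesis
  proof (cases "z = 1")
    case True then show ?thesis using z by simp
  next
    case False
    then have "h z < h 1" using PLo_smono[OF assms, of z 1] z by auto
    moreover have "h 1 \<in> {0..1}" using PLo_in01[OF assms] by simp
    ultimately show ?thesis using z by simp
  qed
qed

lemma PLo_less: assumes "PLo h" "x < y" shows "h x < h y"
proof -
  have A: "\<And>z. z < 0 \<Longrightarrow> h z = z" "\<And>z. z > 1 \<Longrightarrow> h z = z"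
    using PLo_out[OF assms(1)] by auto
  have B: "\<And>z. z \<in> {0..1} \<Longrightarrow> h z \<in> {0..1}" using PLo_in01[OF assms(1)] .
  show ?thesis
  proof (cases "x \<in> {0..1}")
    case xin: True
    show ?thesis
    proof (cases "y \<in> {0..1}")
      case True then show ?thesis using PLo_smono[OF assms(1) xin _ assms(2)] by blast
    next
      case False
      then have "y > 1" using assms(2) xin by auto
      then show ?thesis using A(2)[of y] B[OF xin] by auto
    qed
  next
    case xout: False
    show ?thesis
    proof (cases "x < 0")
      case True
      then show ?thesis
      proof (cases "y \<in> {0..1}")
        case True then show ?thesis using A(1)[of x] B[of y] \<open>x<0\<close> by auto
      next
        case False then show ?thesis using A[of x] A[of y] \<open>x<0\<close> assms(2) by (cases "y < 0") auto
      qed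
    next
      case False
      then have "x > 1" using xout by auto
      then show ?thesis using A(2)[of x] A(2)[of y] assms(2) by auto
    qed
  qed
qed

lemma PLo_less_iff: assumes "PLo h" shows "h x < h y \<longleftrightarrow> x < y"
proof
  assume "h x < h y"
  show "x < y"
  proof (rule ccontr)
    assume "\<not> x < y"
    then have "y < x \<or> y = x" by auto
    then show False using PLo_less[OF assms, of y x] \<open>h x < h y\<close> by auto
  qed
qed (use PLo_less[OF assms] in blast)

lemma PLo_le_iff: "PLo h \<Longrightarrow> h x \<le> h y \<longleftrightarrow> x \<le> y"
  using PLo_less_iff[of h y x] by linarith

lemma PLo_inj: assumes "PLo h" shows "inj h"
proof (rule injI)
  fix x y assume "h x = h y"
  then show "x = y" using PLo_less_iff[OF assms, of x y] PLo_less_iff[OF assms, of y x] by auto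
qed

lemma PLo_surj: assumes "PLo h" shows "surj h"
proof -
  have "h ` {0..1} = {0..1}" using assms unfolding PLo_def bij_betw_def by blast
  have "\<exists>x. h x = y" for y
  proof (cases "y \<in> {0..1}")
    case True
    then have "y \<in> h ` {0..1}" using \<open>h ` {0..1} = {0..1}\<close> by simp
    then show ?thesis by blast
  next
    case False
    then show ?thesis using PLo_out[OF assms, of y] by blast
  qed
  then show ?thesis by (metis surjI)
qed

lemma PLo_bij: "PLo h \<Longrightarrow> bij h"
  using PLo_inj PLo_surj bij_def by blast

lemma PLo_inv1[simp]: "PLo h \<Longrightarrow> inv h (h x) = x"
  by (rule inv_f_f[OF PLo_inj])

lemma PLo_inv2[simp]: "PLo h \<Longrightarrow> h (inv h x) = x"
  by (rule surj_f_inv_f[OF PLo_surj])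

lemma PLo_cont: assumes "PLo h" "0 < x" "x < 1" shows "isCont h x"
proof -
  have "continuous_on {0..1} h" using assms(1) unfolding PLo_def by blast
  moreover have "x \<in> interior {0..1}" using assms by simp
  ultimately show ?thesis using continuous_on_interior by blast
qed

lemma PLo_rgerm:
  assumes "PLo h" "0 \<le> e" "e < 1"
  shows "\<exists>\<delta>>0. e + \<delta> \<le> 1 \<and> (\<exists>m c. m > 0 \<and> (\<forall>x\<in>{e..e+\<delta>}. h x = m * x + c))"
proof -
  obtain S where S: "finite S" "\<And>u v. u < v \<Longrightarrow> {u..v} \<subseteq> {0..1} \<Longrightarrow> {u<..<v} \<inter> S = {} \<Longrightarrow>
           (\<exists>m c. \<forall>x\<in>{u..v}. h x = m * x + c)"
    using assms(1) unfolding PLo_def by blast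
  define D where "D = (\<lambda>s. s - e) ` {s\<in>S. s > e} \<union> {1 - e}"
  have fD: "finite D" using S(1) unfolding D_def by auto
  have pD: "\<forall>d\<in>D. d > 0" using assms unfolding D_def by auto
  define \<delta> where "\<delta> = Min D"
  have "D \<noteq> {}" unfolding D_def by blast
  then have "\<delta> \<in> D" unfolding \<delta>_def using fD Min_in by blast
  then have dpos: "\<delta> > 0" using pD by blast
  have "1 - e \<in> D" unfolding D_def by blast
  then have dle: "\<delta> \<le> 1 - e" using fD unfolding \<delta>_def by (meson Min_le)
  have dS: "{e<..<e+\<delta>} \<inter> S = {}"
  proof (rule ccontr)
    assume "{e<..<e+\<delta>} \<inter> S \<noteq> {}"
    then obtain s where s: "s \<in> S" "e < s" "s < e + \<delta>" by auto
    then have "s - e \<in> D" unfolding D_def by auto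
    then have "\<delta> \<le> s - e" using fD unfolding \<delta>_def by (meson Min_le)
    then show False using s by auto
  qed
  obtain m c where mc: "\<forall>x\<in>{e..e+\<delta>}. h x = m * x + c"
    using S(2)[of e "e+\<delta>"] dpos dle assms dS by auto
  have "h e < h (e + \<delta>)" using PLo_less[OF assms(1)] dpos by simp
  then have "m * e + c < m * (e + \<delta>) + c" using mc dpos by auto
  then have "m * \<delta> > 0" by (simp add: algebra_simps)
  then have "m > 0" using dpos by (simp add: zero_less_mult_iff)
  then show ?thesis using dpos dle mc by (intro exI[of _ \<delta>]) auto
qed

lemma PLo_lgerm:
  assumes "PLo h" "0 < e" "e \<le> 1"
  shows "\<exists>\<delta>>0. 0 \<le> e - \<delta> \<and> (\<exists>m c. m > 0 \<and> (\<forall>x\<in>{e-\<delta>..e}. h x = m * x + c))"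
proof -
  obtain S where S: "finite S" "\<And>u v. u < v \<Longrightarrow> {u..v} \<subseteq> {0..1} \<Longrightarrow> {u<..<v} \<inter> S = {} \<Longrightarrow>
           (\<exists>m c. \<forall>x\<in>{u..v}. h x = m * x + c)"
    using assms(1) unfolding PLo_def by blast
  define D where "D = (\<lambda>s. e - s) ` {s\<in>S. s < e} \<union> {e}"
  have fD: "finite D" using S(1) unfolding D_def by auto
  have pD: "\<forall>d\<in>D. d > 0" using assms unfolding D_def by auto
  define \<delta> where "\<delta> = Min D"
  have "D \<noteq> {}" unfolding D_def by blast
  then have "\<delta> \<in> D" unfolding \<delta>_def using fD Min_in by blast
  then have dpos: "\<delta> > 0" using pD by blast
  have "e \<in> D" unfolding D_def by blast
  then have dle: "\<delta> \<le> e" using fD unfolding \<delta>_def by (meson Min_le)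
  have dS: "{e-\<delta><..<e} \<inter> S = {}"
  proof (rule ccontr)
    assume "{e-\<delta><..<e} \<inter> S \<noteq> {}"
    then obtain s where s: "s \<in> S" "s < e" "e - \<delta> < s" by auto
    then have "e - s \<in> D" unfolding D_def by auto
    then have "\<delta> \<le> e - s" using fD unfolding \<delta>_def by (meson Min_le)
    then show False using s by auto
  qed
  obtain m c where mc: "\<forall>x\<in>{e-\<delta>..e}. h x = m * x + c"
    using S(2)[of "e-\<delta>" e] dpos dle assms dS by auto
  have "h (e - \<delta>) < h e" using PLo_less[OF assms(1)] dpos by simp
  then have "m * (e - \<delta>) + c < m * e + c" using mc dpos by auto
  then have "m * \<delta> > 0" by (simp add: algebra_simps)
  then have "m > 0" using dpos by (simp add: zero_less_mult_iff)
  then show ?thesis using dpos dle mc by (intro exI[of _ \<delta>]) auto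
qed

section \<open>Supports\<close>

lemma supp_comp: "supp (g \<circ> f) \<subseteq> supp f \<union> supp g"
  unfolding supp_def by auto

lemma supp_id[simp]: "supp id = {}"
  unfolding supp_def by auto

lemma supp_inv: assumes "PLo g" shows "supp (inv g) = supp g"
proof -
  have "inv g x \<noteq> x \<longleftrightarrow> g x \<noteq> x" for x
    by (metis PLo_inv1 PLo_inv2 assms)
  then show ?thesis unfolding supp_def by auto
qed

lemma supp_conj: assumes "PLo w" shows "supp (w \<circ> k \<circ> inv w) = w ` supp k"
proof
  show "supp (w \<circ> k \<circ> inv w) \<subseteq> w ` supp k"
  proof
    fix x assume x: "x \<in> supp (w \<circ> k \<circ> inv w)"
    let ?y = "inv w x"
    have "x = w ?y" using assms by simp
    have "w (k ?y) \<noteq> x" using x unfolding supp_def by simp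
    then have "k ?y \<noteq> ?y" using \<open>x = w ?y\<close> by metis
    moreover have "?y \<in> {0..1}"
    proof (rule ccontr)
      assume "?y \<notin> {0..1}"
      then have "w ?y = ?y" using PLo_out[OF assms] by blast
      then have "x = ?y" using assms by simp
      then show False using x \<open>?y \<notin> {0..1}\<close> unfolding supp_def by auto
    qed
    ultimately show "x \<in> w ` supp k" unfolding supp_def using \<open>x = w ?y\<close> by auto
  qed
next
  show "w ` supp k \<subseteq> supp (w \<circ> k \<circ> inv w)"
  proof
    fix x assume "x \<in> w ` supp k"
    then obtain y where y: "y \<in> {0..1}" "k y \<noteq> y" "x = w y" unfolding supp_def by auto
    have "w (k y) \<noteq> w y" using y PLo_inj[OF assms] by (meson injD)
    then show "x \<in> supp (w \<circ> k \<circ> inv w)" using y assms PLo_in01[OF assms] unfolding supp_def by auto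
  qed
qed

section \<open>Derivatives from germs\<close>

lemma right_deriv_eq:
  assumes "\<delta> > 0" "\<forall>x\<in>{a..a+\<delta>}. h x = a + m * (x - a)"
  shows "right_deriv h a = m"
proof -
  have d0: "((\<lambda>x. a + m * (x - a)) has_real_derivative m) (at a within {a..})"
    by (auto intro!: derivative_eq_intros)
  have d: "(h has_real_derivative m) (at a within {a..})"
  proof (rule has_field_derivative_transform_within[OF d0 assms(1)])
    show "a \<in> {a..}" by simp
    fix x assume "x \<in> {a..}" "dist x a < \<delta>"
    then show "a + m * (x - a) = h x" using assms(2) by (auto simp: dist_real_def)
  qed
  have nb: "at a within {a..} \<noteq> bot" by (simp add: at_within_Ici_at_right)
  show ?thesis unfolding right_deriv_def
  proof (rule the_equality[where P="\<lambda>d. (h has_real_derivative d) _", OF d])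
    fix d' assume "(h has_real_derivative d') (at a within {a..})"
    then show "d' = m" using has_field_derivative_unique[OF _ d nb] by blast
  qed
qed

lemma left_deriv_eq:
  assumes "\<delta> > 0" "\<forall>x\<in>{b-\<delta>..b}. h x = b + m * (x - b)"
  shows "left_deriv h b = m"
proof -
  have d0: "((\<lambda>x. b + m * (x - b)) has_real_derivative m) (at b within {..b})"
    by (auto intro!: derivative_eq_intros)
  have d: "(h has_real_derivative m) (at b within {..b})"
  proof (rule has_field_derivative_transform_within[OF d0 assms(1)])
    show "b \<in> {..b}" by simp
    fix x assume "x \<in> {..b}" "dist x b < \<delta>"
    then show "b + m * (x - b) = h x" using assms(2) by (auto simp: dist_real_def)
  qed
  have nb: "at b within {..b} \<noteq> bot" by (simp add: at_within_Iic_at_left)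
  show ?thesis unfolding left_deriv_def
  proof (rule the_equality[where P="\<lambda>d. (h has_real_derivative d) _", OF d])
    fix d' assume "(h has_real_derivative d') (at b within {..b})"
    then show "d' = m" using has_field_derivative_unique[OF _ d nb] by blast
  qed
qed



lemma Inf_eq_left:
  fixes B :: "real set"
  assumes "a < c" "{a<..<c} \<subseteq> B" "B \<subseteq> {a<..}"
  shows "Inf B = a"
proof (rule antisym)
  have "Inf B \<le> Inf {a<..<c}"
  proof (rule cInf_superset_mono)
    show "bdd_below B" by (rule bdd_belowI[of _ a]) (use assms(3) in auto)
  qed (use assms in auto)
  then show "Inf B \<le> a" using assms(1) by simp
  show "a \<le> Inf B" by (rule cInf_greatest) (use assms in auto)
qed

lemma Sup_eq_right:
  fixes B :: "real set"
  assumes "c < b" "{c<..<b} \<subseteq> B" "B \<subseteq> {..<b}"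
  shows "Sup B = b"
proof (rule antisym)
  have "Sup {c<..<b} \<le> Sup B"
  proof (rule cSup_subset_mono)
    show "bdd_above B" by (rule bdd_aboveI[of _ b]) (use assms(3) in auto)
  qed (use assms in auto)
  then show "b \<le> Sup B" using assms(1) by simp
  show "Sup B \<le> b" by (rule cSup_least) (use assms in auto)
qed

locale setting =
  fixes H :: "(real \<Rightarrow> real) set" and a b :: real
  assumes grp: "PL_subgroup H" and bal: "balanced H" and orb: "group_orbitals H = {{a<..<b}}"
begin

lemma H_PLo: "h \<in> H \<Longrightarrow> PLo h"
  using grp unfolding PL_subgroup_def by blast

lemma H_comp: "f \<in> H \<Longrightarrow> g \<in> H \<Longrightarrow> g \<circ> f \<in> H"
  using grp unfolding PL_subgroup_def by blast

lemma H_inv: "f \<in> H \<Longrightarrow> inv f \<in> H"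
  using grp unfolding PL_subgroup_def by blast

lemma H_id: "id \<in> H"
  using grp unfolding PL_subgroup_def by blast

lemma H_pow: "f \<in> H \<Longrightarrow> f ^^ n \<in> H"
  by (induction n) (auto simp: H_id H_comp)

lemma H_conj: "w \<in> H \<Longrightarrow> k \<in> H \<Longrightarrow> w \<circ> k \<circ> inv w \<in> H"
  by (simp add: H_comp H_inv)

lemma U_eq: "(\<Union>h\<in>H. supp h) = {a<..<b}"
proof -
  let ?U = "\<Union>h\<in>H. supp h"
  have "{a<..<b} \<in> group_orbitals H" using orb by simp
  then obtain x where x: "x \<in> ?U" "{a<..<b} = connected_component_set ?U x"
    unfolding group_orbitals_def by blast
  then have "{a<..<b} \<subseteq> ?U" using connected_component_subset by metis
  moreover have "?U \<subseteq> {a<..<b}"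
  proof
    fix y assume "y \<in> ?U"
    then have "connected_component_set ?U y \<in> group_orbitals H" unfolding group_orbitals_def by blast
    then have "connected_component_set ?U y = {a<..<b}" using orb by simp
    then show "y \<in> {a<..<b}" using \<open>y \<in> ?U\<close> by (metis connected_component_refl_eq mem_Collect_eq)
  qed
  ultimately show ?thesis by blast
qed

lemma ab: "a < b" "0 \<le> a" "b \<le> 1"
proof -
  let ?U = "\<Union>h\<in>H. supp h"
  have "{a<..<b} \<in> group_orbitals H" using orb by simp
  then obtain x where x: "x \<in> ?U" "{a<..<b} = connected_component_set ?U x"
    unfolding group_orbitals_def by blast
  then have "x \<in> {a<..<b}" by simp
  then show ab: "a < b" by simp
  have sub: "{a<..<b} \<subseteq> {0..1}" using U_eq unfolding supp_def by auto
  show "0 \<le> a"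
  proof (rule ccontr)
    assume "\<not> 0 \<le> a"
    define z where "z = (a + min b 0) / 2"
    have "a < min b 0" using ab \<open>\<not> 0 \<le> a\<close> by simp
    then have "z \<in> {a<..<b}" "z < 0" unfolding z_def by (auto simp: min_less_iff_conj)
    then show False using sub by auto
  qed
  show "b \<le> 1"
  proof (rule ccontr)
    assume "\<not> b \<le> 1"
    define z where "z = (b + max a 1) / 2"
    have "max a 1 < b" using ab \<open>\<not> b \<le> 1\<close> by simp
    then have "z \<in> {a<..<b}" "z > 1" unfolding z_def by (auto simp: max_less_iff_conj)
    then show False using sub by auto
  qed
qed

lemma supp_H: "h \<in> H \<Longrightarrow> supp h \<subseteq> {a<..<b}"
  using U_eq by blast

lemma H_fix: assumes "h \<in> H" "x \<notin> {a<..<b}" shows "h x = x"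
proof (cases "x \<in> {0..1}")
  case True
  then show ?thesis using supp_H[OF assms(1)] assms(2) unfolding supp_def by blast
next
  case False
  then show ?thesis using PLo_out[OF H_PLo[OF assms(1)]] by blast
qed

lemma H_fa: "h \<in> H \<Longrightarrow> h a = a" by (rule H_fix) auto
lemma H_fb: "h \<in> H \<Longrightarrow> h b = b" by (rule H_fix) auto

lemma H_maps: assumes "h \<in> H" "a < x" "x < b" shows "a < h x" "h x < b"
  using PLo_less[OF H_PLo[OF assms(1)], of a x] PLo_less[OF H_PLo[OF assms(1)], of x b]
    H_fa[OF assms(1)] H_fb[OF assms(1)] assms by auto

definition sa :: "(real \<Rightarrow> real) \<Rightarrow> real" where "sa h = right_deriv h a"
definition sb :: "(real \<Rightarrow> real) \<Rightarrow> real" where "sb h = left_deriv h b"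

lemma germ_a: assumes "h \<in> H"
  shows "sa h > 0 \<and> (\<exists>\<delta>>0. \<delta> \<le> (b-a)/2 \<and> (\<forall>x\<in>{a..a+\<delta>}. h x = a + sa h * (x - a)))"
proof -
  have "a < 1" using ab by linarith
  obtain \<delta> m c where d: "\<delta> > 0" "m > 0" "\<forall>x\<in>{a..a+\<delta>}. h x = m * x + c"
    using PLo_rgerm[OF H_PLo[OF assms] ab(2) \<open>a < 1\<close>] by blast
  have "h a = a" using H_fa[OF assms] .
  then have "m * a + c = a" using d(1,3) by auto
  then have e: "\<forall>x\<in>{a..a+\<delta>}. h x = a + m * (x - a)" using d(3) by (auto simp: algebra_simps)
  then have "sa h = m" unfolding sa_def using right_deriv_eq[OF d(1)] by blast
  define \<delta>' where "\<delta>' = min \<delta> ((b-a)/2)"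
  have "\<delta>' > 0" using d(1) ab unfolding \<delta>'_def by auto
  have "\<delta>' \<le> (b-a)/2" unfolding \<delta>'_def by (rule min.cobounded2)
  moreover note \<open>\<delta>' \<le> (b-a)/2\<close>
  moreover have "\<forall>x\<in>{a..a+\<delta>'}. h x = a + sa h * (x - a)" using e \<open>sa h = m\<close> unfolding \<delta>'_def by auto
  ultimately show ?thesis using \<open>sa h = m\<close> d(2) \<open>\<delta>' > 0\<close> by blast
qed

lemma germ_b: assumes "h \<in> H"
  shows "sb h > 0 \<and> (\<exists>\<delta>>0. \<delta> \<le> (b-a)/2 \<and> (\<forall>x\<in>{b-\<delta>..b}. h x = b + sb h * (x - b)))"
proof -
  have "0 < b" using ab by linarith
  obtain \<delta> m c where d: "\<delta> > 0" "m > 0" "\<forall>x\<in>{b-\<delta>..b}. h x = m * x + c"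
    using PLo_lgerm[OF H_PLo[OF assms] \<open>0 < b\<close> ab(3)] by blast
  have "h b = b" using H_fb[OF assms] .
  then have "m * b + c = b" using d(1,3) by auto
  then have e: "\<forall>x\<in>{b-\<delta>..b}. h x = b + m * (x - b)" using d(3) by (auto simp: algebra_simps)
  then have "sb h = m" unfolding sb_def using left_deriv_eq[OF d(1)] by blast
  define \<delta>' where "\<delta>' = min \<delta> ((b-a)/2)"
  have "\<delta>' > 0" using d(1) ab unfolding \<delta>'_def by auto
  have "\<delta>' \<le> (b-a)/2" unfolding \<delta>'_def by (rule min.cobounded2)
  moreover note \<open>\<delta>' \<le> (b-a)/2\<close>
  moreover have "\<forall>x\<in>{b-\<delta>'..b}. h x = b + sb h * (x - b)" using e \<open>sb h = m\<close> unfolding \<delta>'_def by auto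
  ultimately show ?thesis using \<open>sb h = m\<close> d(2) \<open>\<delta>' > 0\<close> by blast
qed

lemma sa_pos: "h \<in> H \<Longrightarrow> sa h > 0" using germ_a by blast
lemma sb_pos: "h \<in> H \<Longrightarrow> sb h > 0" using germ_b by blast

lemma sa_comp: assumes "f \<in> H" "g \<in> H" shows "sa (g \<circ> f) = sa f * sa g"
proof -
  obtain df where df: "df > 0" "\<forall>x\<in>{a..a+df}. f x = a + sa f * (x - a)" using germ_a[OF assms(1)] by blast
  obtain dg where dg: "dg > 0" "\<forall>x\<in>{a..a+dg}. g x = a + sa g * (x - a)" using germ_a[OF assms(2)] by blast
  have pf: "sa f > 0" using sa_pos[OF assms(1)] .
  define d where "d = min df (dg / sa f)"
  have dpos: "d > 0" using df dg pf unfolding d_def by auto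
  have "\<forall>x\<in>{a..a+d}. (g \<circ> f) x = a + (sa f * sa g) * (x - a)"
  proof
    fix x assume x: "x \<in> {a..a+d}"
    then have fx: "f x = a + sa f * (x - a)" using df(2) unfolding d_def by auto
    have "sa f * (x - a) \<le> sa f * (dg / sa f)"
      using x pf unfolding d_def by (intro mult_left_mono) auto
    then have "sa f * (x - a) \<le> dg" using pf by simp
    moreover have "0 \<le> sa f * (x - a)" using x pf by auto
    ultimately have "f x \<in> {a..a+dg}" using fx by auto
    then have "g (f x) = a + sa g * (f x - a)" using dg(2) by blast
    moreover have "f x - a = sa f * (x - a)" using fx by simp
    ultimately show "(g \<circ> f) x = a + (sa f * sa g) * (x - a)" by (simp add: mult.commute mult.left_commute)
  qed
  then show ?thesis unfolding sa_def using right_deriv_eq[OF dpos] by blast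
qed

lemma sb_comp: assumes "f \<in> H" "g \<in> H" shows "sb (g \<circ> f) = sb f * sb g"
proof -
  obtain df where df: "df > 0" "\<forall>x\<in>{b-df..b}. f x = b + sb f * (x - b)" using germ_b[OF assms(1)] by blast
  obtain dg where dg: "dg > 0" "\<forall>x\<in>{b-dg..b}. g x = b + sb g * (x - b)" using germ_b[OF assms(2)] by blast
  have pf: "sb f > 0" using sb_pos[OF assms(1)] .
  define d where "d = min df (dg / sb f)"
  have dpos: "d > 0" using df dg pf unfolding d_def by auto
  have "\<forall>x\<in>{b-d..b}. (g \<circ> f) x = b + (sb f * sb g) * (x - b)"
  proof
    fix x assume x: "x \<in> {b-d..b}"
    then have fx: "f x = b + sb f * (x - b)" using df(2) unfolding d_def by auto
    have "sb f * (b - x) \<le> sb f * (dg / sb f)"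
      using x pf unfolding d_def by (intro mult_left_mono) auto
    then have "sb f * (b - x) \<le> dg" using pf by simp
    moreover have "0 \<le> sb f * (b - x)" using x pf by auto
    ultimately have "f x \<in> {b-dg..b}" using fx by (auto simp: algebra_simps)
    then have "g (f x) = b + sb g * (f x - b)" using dg(2) by blast
    moreover have "f x - b = sb f * (x - b)" using fx by simp
    ultimately show "(g \<circ> f) x = b + (sb f * sb g) * (x - b)" by (simp add: mult.commute mult.left_commute)
  qed
  then show ?thesis unfolding sb_def using left_deriv_eq[OF dpos] by blast
qed

lemma sa_id: "sa id = 1"
  unfolding sa_def by (rule right_deriv_eq[of 1]) auto

lemma sb_id: "sb id = 1"
  unfolding sb_def by (rule left_deriv_eq[of 1]) auto

lemma inv_comp_id: "h \<in> H \<Longrightarrow> inv h \<circ> h = id"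
  using H_PLo by (auto simp: fun_eq_iff)

lemma comp_inv_id: "h \<in> H \<Longrightarrow> h \<circ> inv h = id"
  using H_PLo by (auto simp: fun_eq_iff)

lemma sa_inv: assumes "h \<in> H" shows "sa (inv h) = 1 / sa h"
proof -
  have "sa (inv h \<circ> h) = 1" using inv_comp_id[OF assms] sa_id by simp
  then have "sa h * sa (inv h) = 1" using sa_comp[OF assms H_inv[OF assms]] by simp
  then show ?thesis using sa_pos[OF assms] by (simp add: field_simps)
qed

lemma sb_inv: assumes "h \<in> H" shows "sb (inv h) = 1 / sb h"
proof -
  have "sb (inv h \<circ> h) = 1" using inv_comp_id[OF assms] sb_id by simp
  then have "sb h * sb (inv h) = 1" using sb_comp[OF assms H_inv[OF assms]] by simp
  then show ?thesis using sb_pos[OF assms] by (simp add: field_simps)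
qed

end


context setting begin

lemma real_a: assumes "h \<in> H" shows "realizes h {a<..<b} a \<longleftrightarrow> sa h \<noteq> 1"
proof -
  obtain \<delta> where d: "\<delta> > 0" "\<delta> \<le> (b-a)/2" "\<forall>x\<in>{a..a+\<delta>}. h x = a + sa h * (x - a)"
    using germ_a[OF assms] by blast
  show ?thesis
  proof
    assume "sa h \<noteq> 1"
    have sub: "{a<..<a+\<delta>} \<subseteq> supp h"
    proof
      fix x assume x: "x \<in> {a<..<a+\<delta>}"
      then have "h x = a + sa h * (x - a)" using d(3) by auto
      moreover have "(sa h - 1) * (x - a) \<noteq> 0" using x \<open>sa h \<noteq> 1\<close> by auto
      ultimately have "h x \<noteq> x" by (auto simp: algebra_simps)
      moreover have "x \<in> {0..1}" using x d ab by auto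
      ultimately show "x \<in> supp h" unfolding supp_def by auto
    qed
    define x0 where "x0 = a + \<delta>/2"
    have x0: "x0 \<in> {a<..<a+\<delta>}" using d unfolding x0_def by auto
    define B where "B = connected_component_set (supp h) x0"
    have Bo: "B \<in> elem_orbitals h" unfolding elem_orbitals_def B_def using sub x0 by blast
    have Bsub: "B \<subseteq> {a<..<b}" unfolding B_def using connected_component_subset supp_H[OF assms] by blast
    have "{a<..<a+\<delta>} \<subseteq> B" unfolding B_def by (rule connected_component_maximal[OF x0 _ sub]) simp
    moreover have "B \<subseteq> {a<..}" using Bsub by auto
    ultimately have "Inf B = a" using Inf_eq_left[of a "a+\<delta>" B] d(1) by auto
    then show "realizes h {a<..<b} a" unfolding realizes_def using Bo Bsub by blast
  next
    assume r: "realizes h {a<..<b} a"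
    show "sa h \<noteq> 1"
    proof
      assume s1: "sa h = 1"
      obtain B where B: "B \<in> elem_orbitals h" "B \<subseteq> {a<..<b}" "a = Inf B \<or> a = Sup B"
        using r unfolding realizes_def by blast
      obtain x where x: "x \<in> supp h" "B = connected_component_set (supp h) x"
        using B(1) unfolding elem_orbitals_def by blast
      have xB: "x \<in> B" using x by simp
      have Bs: "B \<subseteq> supp h" using x connected_component_subset by metis
      have Bd: "B \<subseteq> {a+\<delta><..}"
      proof
        fix y assume y: "y \<in> B"
        then have "y \<in> {a<..<b}" "h y \<noteq> y" using B(2) Bs unfolding supp_def by auto
        then show "y \<in> {a+\<delta><..}" using d(3) s1 by (cases "y \<le> a + \<delta>") auto
      qed
      have "a + \<delta> \<le> Inf B" by (rule cInf_greatest) (use xB Bd in auto)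
      moreover have "x \<le> Sup B" by (rule cSup_upper[OF xB]) (rule bdd_aboveI[of _ b], use B(2) in auto)
      moreover have "a + \<delta> < x" using xB Bd by auto
      ultimately show False using B(3) d(1) by auto
    qed
  qed
qed

lemma real_b: assumes "h \<in> H" shows "realizes h {a<..<b} b \<longleftrightarrow> sb h \<noteq> 1"
proof -
  obtain \<delta> where d: "\<delta> > 0" "\<delta> \<le> (b-a)/2" "\<forall>x\<in>{b-\<delta>..b}. h x = b + sb h * (x - b)"
    using germ_b[OF assms] by blast
  show ?thesis
  proof
    assume "sb h \<noteq> 1"
    have sub: "{b-\<delta><..<b} \<subseteq> supp h"
    proof
      fix x assume x: "x \<in> {b-\<delta><..<b}"
      then have "h x = b + sb h * (x - b)" using d(3) by auto
      moreover have "(sb h - 1) * (x - b) \<noteq> 0" using x \<open>sb h \<noteq> 1\<close> by auto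
      ultimately have "h x \<noteq> x" by (auto simp: algebra_simps)
      moreover have "x \<in> {0..1}" using x d ab by auto
      ultimately show "x \<in> supp h" unfolding supp_def by auto
    qed
    define x0 where "x0 = b - \<delta>/2"
    have x0: "x0 \<in> {b-\<delta><..<b}" using d unfolding x0_def by auto
    define B where "B = connected_component_set (supp h) x0"
    have Bo: "B \<in> elem_orbitals h" unfolding elem_orbitals_def B_def using sub x0 by blast
    have Bsub: "B \<subseteq> {a<..<b}" unfolding B_def using connected_component_subset supp_H[OF assms] by blast
    have "{b-\<delta><..<b} \<subseteq> B" unfolding B_def by (rule connected_component_maximal[OF x0 _ sub]) simp
    moreover have "B \<subseteq> {..<b}" using Bsub by auto
    ultimately have "Sup B = b" using Sup_eq_right[of "b-\<delta>" b B] d(1) by auto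
    then show "realizes h {a<..<b} b" unfolding realizes_def using Bo Bsub by blast
  next
    assume r: "realizes h {a<..<b} b"
    show "sb h \<noteq> 1"
    proof
      assume s1: "sb h = 1"
      obtain B where B: "B \<in> elem_orbitals h" "B \<subseteq> {a<..<b}" "b = Inf B \<or> b = Sup B"
        using r unfolding realizes_def by blast
      obtain x where x: "x \<in> supp h" "B = connected_component_set (supp h) x"
        using B(1) unfolding elem_orbitals_def by blast
      have xB: "x \<in> B" using x by simp
      have Bs: "B \<subseteq> supp h" using x connected_component_subset by metis
      have Bd: "B \<subseteq> {..<b-\<delta>}"
      proof
        fix y assume y: "y \<in> B"
        then have "y \<in> {a<..<b}" "h y \<noteq> y" using B(2) Bs unfolding supp_def by auto
        then show "y \<in> {..<b-\<delta>}" using d(3) s1 by (cases "y \<ge> b - \<delta>") auto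
      qed
      have "Sup B \<le> b - \<delta>" by (rule cSup_least) (use xB Bd in auto)
      moreover have "Inf B \<le> x" by (rule cInf_lower[OF xB]) (rule bdd_belowI[of _ a], use B(2) in auto)
      moreover have "x < b - \<delta>" using xB Bd by auto
      ultimately show False using B(3) d(1) by auto
    qed
  qed
qed

lemma F1: assumes "h \<in> H" shows "sa h = 1 \<longleftrightarrow> sb h = 1"
proof -
  have "PL_subgroup H \<and> H \<subseteq> H" using grp by simp
  then have "\<forall>A\<in>group_orbitals H. \<forall>g\<in>H. realizes g A (Inf A) \<longleftrightarrow> realizes g A (Sup A)"
    using bal unfolding balanced_def by blast
  then have "realizes h {a<..<b} a \<longleftrightarrow> realizes h {a<..<b} b"
    using orb assms ab(1) by auto
  then show ?thesis using real_a[OF assms] real_b[OF assms] by blast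
qed

lemma orbit_down: assumes "a < x" "x < b" "a < y" "y < b" shows "\<exists>u\<in>H. u x < y"
proof (rule ccontr)
  assume "\<not> (\<exists>u\<in>H. u x < y)"
  then have ge: "\<forall>u\<in>H. y \<le> u x" by auto
  define Orb where "Orb = (\<lambda>u. u x) ` H"
  have One: "Orb \<noteq> {}" using H_id unfolding Orb_def by blast
  have Obdd: "bdd_below Orb" unfolding Orb_def using ge by (intro bdd_belowI[of _ y]) auto
  define s where "s = Inf Orb"
  have sy: "y \<le> s" unfolding s_def using One ge by (intro cInf_greatest) (auto simp: Orb_def)
  have "x \<in> Orb" unfolding Orb_def using H_id by (metis id_apply image_eqI)
  then have sx: "s \<le> x" unfolding s_def using Obdd by (intro cInf_lower)
  have sab: "s \<in> {a<..<b}" using sy sx assms by auto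
  then obtain g where g: "g \<in> H" "s \<in> supp g" using U_eq by blast
  have "\<exists>g'\<in>H. g' s < s"
  proof (cases "g s < s")
    case True then show ?thesis using g by blast
  next
    case False
    then have "g s > s" using g unfolding supp_def by auto
    then have "g (inv g s) < g s" using H_PLo[OF g(1)] by simp
    then have "inv g s < s" using PLo_less_iff[OF H_PLo[OF g(1)]] by blast
    then show ?thesis using H_inv[OF g(1)] by blast
  qed
  then obtain g' where g': "g' \<in> H" "g' s < s" by blast
  have "isCont g' s" using PLo_cont[OF H_PLo[OF g'(1)]] sab ab by auto
  then have "g' \<midarrow>s\<rightarrow> g' s" by (simp add: isCont_def)
  then obtain \<eta> where eta: "\<eta> > 0" "\<forall>z. z \<noteq> s \<and> norm (z - s) < \<eta> \<longrightarrow> norm (g' z - g' s) < s - g' s"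
    using LIM_D[of g' "g' s" s "s - g' s"] g'(2) by auto
  have "\<forall>z. \<bar>z - s\<bar> < \<eta> \<longrightarrow> g' z < s"
  proof (intro allI impI)
    fix z assume "\<bar>z - s\<bar> < \<eta>"
    then show "g' z < s" using eta(2)[rule_format, of z] g'(2) by (cases "z = s") auto
  qed
  moreover obtain ob where ob: "ob \<in> Orb" "ob < s + \<eta>" using cInf_lessD[OF One, of "s + \<eta>"] eta(1) unfolding s_def by auto
  moreover have "s \<le> ob" unfolding s_def using ob(1) Obdd by (rule cInf_lower)
  ultimately have "g' ob < s" by auto
  moreover obtain u where u: "u \<in> H" "ob = u x" using ob(1) unfolding Orb_def by blast
  moreover have "(g' \<circ> u) x \<in> Orb" unfolding Orb_def using H_comp[OF u(1) g'(1)] by blast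
  then have "s \<le> (g' \<circ> u) x" unfolding s_def using Obdd by (rule cInf_lower)
  ultimately show False by simp
qed

lemma orbit_up: assumes "a < x" "x < b" "a < y" "y < b" shows "\<exists>F\<in>H. y < F x"
proof -
  obtain u where u: "u \<in> H" "u y < x" using orbit_down[OF assms(3,4,1,2)] by blast
  have "inv u (u y) < inv u x" using PLo_less[OF H_PLo[OF H_inv[OF u(1)]] u(2)] .
  then have "y < inv u x" using H_PLo[OF u(1)] by simp
  then show ?thesis using H_inv[OF u(1)] by blast
qed

end


lemma ext_lemma:
  fixes g h :: "real \<Rightarrow> real"
  assumes sg: "\<sigma> = 1 \<or> \<sigma> = -1" and k: "\<kappa> > 1" and "\<epsilon> > 0" and d: "\<delta> > 0" and mu: "0 < \<mu>" "\<mu> \<le> \<kappa>"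
    and G: "\<forall>t\<in>{0..\<epsilon>}. g (e + \<sigma>*t) = e + \<sigma>*(\<kappa>*t)"
    and Hh: "\<forall>t\<in>{0..\<delta>}. h (e + \<sigma>*t) = e + \<sigma>*(\<mu>*t)"
    and C: "\<forall>y. h (g y) = g (h y)"
  shows "\<forall>t\<in>{0..\<epsilon>}. h (e + \<sigma>*t) = e + \<sigma>*(\<mu>*t)"
proof -
  have main: "\<forall>t. 0 \<le> t \<and> t \<le> \<epsilon> \<and> t \<le> \<kappa>^n * \<delta> \<longrightarrow> h (e + \<sigma>*t) = e + \<sigma>*(\<mu>*t)" for n
  proof (induction n)
    case 0 then show ?case using Hh by auto
  next
    case (Suc n)
    show ?case
    proof (intro allI impI)
      fix t assume t: "0 \<le> t \<and> t \<le> \<epsilon> \<and> t \<le> \<kappa>^Suc n * \<delta>"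
      define t' where "t' = t / \<kappa>"
      have t'0: "0 \<le> t'" using t k unfolding t'_def by auto
      have tt': "t = \<kappa> * t'" using k unfolding t'_def by auto
      have "0 \<le> (\<kappa> - 1) * t'" using k t'0 by simp
      then have "t' \<le> t" using tt' by (simp add: algebra_simps)
      then have t'e: "t' \<le> \<epsilon>" using t by auto
      have "\<kappa> * t' \<le> \<kappa> * (\<kappa>^n * \<delta>)" using t tt' by (simp add: mult.assoc)
      then have t'n: "t' \<le> \<kappa>^n * \<delta>" using k by simp
      have IH: "h (e + \<sigma>*t') = e + \<sigma>*(\<mu>*t')" using Suc.IH t'0 t'e t'n by blast
      have g1: "g (e + \<sigma>*t') = e + \<sigma>*t" using G t'0 t'e tt' by auto
      have "\<mu> * t' \<le> \<kappa> * t'" using mu t'0 by (simp add: mult_right_mono)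
      then have mt: "\<mu> * t' \<in> {0..\<epsilon>}" using t tt' mu t'0 by auto
      have "h (e + \<sigma>*t) = h (g (e + \<sigma>*t'))" using g1 by simp
      also have "\<dots> = g (h (e + \<sigma>*t'))" using C by simp
      also have "\<dots> = g (e + \<sigma>*(\<mu>*t'))" using IH by simp
      also have "\<dots> = e + \<sigma>*(\<kappa>*(\<mu>*t'))" using G mt by blast
      also have "\<dots> = e + \<sigma>*(\<mu>*t)" using tt' by (simp add: algebra_simps)
      finally show "h (e + \<sigma>*t) = e + \<sigma>*(\<mu>*t)" .
    qed
  qed
  show ?thesis
  proof
    fix t assume t: "t \<in> {0..\<epsilon>}"
    obtain n where "t / \<delta> < \<kappa>^n" using real_arch_pow[OF k] by blast
    then have "t \<le> \<kappa>^n * \<delta>" using d by (simp add: field_simps)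
    then show "h (e + \<sigma>*t) = e + \<sigma>*(\<mu>*t)" using main t by auto
  qed
qed

lemma alg_contra:
  fixes s c u a b \<mu> \<rho> t1 t2 :: real
  assumes "s > 0" "\<mu> \<noteq> 1" "t1 \<noteq> t2" "u > a" "s*u + c < b"
    "s*(a + \<mu>*(t1 - a)) + c = b + \<rho>*(s*t1 + c - b)"
    "s*(a + \<mu>*(t2 - a)) + c = b + \<rho>*(s*t2 + c - b)"
  shows False
proof -
  have "s * \<mu> * (t1 - t2) = \<rho> * s * (t1 - t2)" using assms(6,7) by (simp add: algebra_simps)
  then have "\<mu> = \<rho>" using assms(1,3) by simp
  then have "(1 - \<mu>) * (s*a + c - b) = 0" using assms(6) by (simp add: algebra_simps)
  then have "s*a + c = b" using assms(2) by simp
  then have "s*u + c = b + s*(u - a)" by (simp add: algebra_simps)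
  moreover have "s*(u-a) > 0" using assms(1,4) by simp
  ultimately show False using assms(5) by simp
qed

lemma two_points:
  fixes P Q \<mu> :: real
  assumes "0 < P" "P < Q" "0 < \<mu>" "\<mu> \<noteq> 1" "\<mu> * P < Q" "P < \<mu> * Q"
  shows "\<exists>t1 t2. t1 \<noteq> t2 \<and> (\<forall>t\<in>{t1,t2}. P \<le> t \<and> t \<le> Q \<and> P \<le> \<mu>*t \<and> \<mu>*t \<le> Q)"
proof (cases "\<mu> > 1")
  case True
  have a1: "P \<le> \<mu> * P" using True assms(1) by simp
  have a2: "Q / \<mu> \<le> Q" using True assms(1,2) by (simp add: divide_le_eq)
  have a3: "P < Q / \<mu>" using assms(3,5) by (simp add: pos_less_divide_eq mult.commute)
  have a4: "\<mu> * (Q / \<mu>) = Q" using assms(3) by simp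
  have "P \<noteq> Q / \<mu>" using a3 by simp
  moreover have "\<forall>t\<in>{P, Q / \<mu>}. P \<le> t \<and> t \<le> Q \<and> P \<le> \<mu>*t \<and> \<mu>*t \<le> Q"
  proof
    fix t assume "t \<in> {P, Q / \<mu>}"
    then have "t = P \<or> t = Q / \<mu>" by simp
    then show "P \<le> t \<and> t \<le> Q \<and> P \<le> \<mu>*t \<and> \<mu>*t \<le> Q"
    proof
      assume "t = P" then show ?thesis using a1 assms(2,5) by simp
    next
      assume "t = Q / \<mu>" then show ?thesis using a2 a3 a4 assms(2) by simp
    qed
  qed
  ultimately show ?thesis by blast
next
  case False
  then have m1: "\<mu> < 1" using assms(4) by simp
  have a1: "\<mu> * Q \<le> Q" using m1 assms(1,2) by simp
  have a2: "P \<le> P / \<mu>" using m1 assms(1,3) by (simp add: le_divide_eq)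
  have a3: "P / \<mu> < Q" using assms(3,6) by (simp add: pos_divide_less_eq mult.commute)
  have a4: "\<mu> * (P / \<mu>) = P" using assms(3) by simp
  have "Q \<noteq> P / \<mu>" using a3 by simp
  moreover have "\<forall>t\<in>{Q, P / \<mu>}. P \<le> t \<and> t \<le> Q \<and> P \<le> \<mu>*t \<and> \<mu>*t \<le> Q"
  proof
    fix t assume "t \<in> {Q, P / \<mu>}"
    then have "t = Q \<or> t = P / \<mu>" by simp
    then show "P \<le> t \<and> t \<le> Q \<and> P \<le> \<mu>*t \<and> \<mu>*t \<le> Q"
    proof
      assume "t = Q" then show ?thesis using a1 assms(2,6) by simp
    next
      assume "t = P / \<mu>" then show ?thesis using a2 a3 a4 by simp
    qed
  qed
  ultimately show ?thesis by blast
qed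

context setting begin

lemma ext_a:
  assumes f: "f \<in> H" "sa f > 1" and ea: "\<epsilon> > 0" "\<forall>x\<in>{a..a+\<epsilon>}. f x = a + sa f * (x - a)"
    and comm: "\<forall>y. h (f y) = f (h y)" and h: "h \<in> H" "sa h \<le> sa f"
  shows "\<forall>x\<in>{a..a+\<epsilon>}. h x = a + sa h * (x - a)"
proof -
  obtain \<delta> where d: "\<delta> > 0" "\<forall>x\<in>{a..a+\<delta>}. h x = a + sa h * (x - a)" using germ_a[OF h(1)] by blast
  have G: "\<forall>t\<in>{0..\<epsilon>}. f (a + 1*t) = a + 1*(sa f*t)" using ea by auto
  have Hh: "\<forall>t\<in>{0..\<delta>}. h (a + 1*t) = a + 1*(sa h*t)" using d by auto
  have r: "\<forall>t\<in>{0..\<epsilon>}. h (a + 1*t) = a + 1*(sa h*t)"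
    by (rule ext_lemma[OF _ f(2) ea(1) d(1) sa_pos[OF h(1)] h(2) G Hh comm]) simp
  show ?thesis
  proof
    fix x assume "x \<in> {a..a+\<epsilon>}"
    then have "x - a \<in> {0..\<epsilon>}" by auto
    then have "h (a + 1*(x - a)) = a + 1*(sa h*(x - a))" using r by blast
    then show "h x = a + sa h * (x - a)" by simp
  qed
qed

lemma ext_b:
  assumes f: "f \<in> H" "sb f > 1" and ea: "\<epsilon> > 0" "\<forall>x\<in>{b-\<epsilon>..b}. f x = b + sb f * (x - b)"
    and comm: "\<forall>y. h (f y) = f (h y)" and h: "h \<in> H" "sb h \<le> sb f"
  shows "\<forall>x\<in>{b-\<epsilon>..b}. h x = b + sb h * (x - b)"
proof -
  obtain \<delta> where d: "\<delta> > 0" "\<forall>x\<in>{b-\<delta>..b}. h x = b + sb h * (x - b)" using germ_b[OF h(1)] by blast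
  have G: "\<forall>t\<in>{0..\<epsilon>}. f (b + (-1)*t) = b + (-1)*(sb f*t)" using ea by auto
  have Hh: "\<forall>t\<in>{0..\<delta>}. h (b + (-1)*t) = b + (-1)*(sb h*t)" using d by auto
  have r: "\<forall>t\<in>{0..\<epsilon>}. h (b + (-1)*t) = b + (-1)*(sb h*t)"
    by (rule ext_lemma[OF _ f(2) ea(1) d(1) sb_pos[OF h(1)] h(2) G Hh comm]) simp
  show ?thesis
  proof
    fix x assume "x \<in> {b-\<epsilon>..b}"
    then have "b - x \<in> {0..\<epsilon>}" by auto
    then have "h (b + (-1)*(b - x)) = b + (-1)*(sb h*(b - x))" using r by blast
    then show "h x = b + sb h * (x - b)" by (simp add: algebra_simps)
  qed
qed

lemma caseA:
  assumes comm: "\<forall>f\<in>H. \<forall>g\<in>H. f \<circ> g = g \<circ> f"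
    and small: "\<forall>r>1. \<exists>h\<in>H. 1 < sa h \<and> sa h < r"
  shows False
proof -
  have commp: "\<And>f g y. f \<in> H \<Longrightarrow> g \<in> H \<Longrightarrow> f (g y) = g (f y)"
    using comm by (metis comp_apply)
  obtain f where f: "f \<in> H" "1 < sa f" using small by (metis one_less_numeral_iff semiring_norm(76))
  obtain \<epsilon>a where ea: "\<epsilon>a > 0" "\<epsilon>a \<le> (b-a)/2" "\<forall>x\<in>{a..a+\<epsilon>a}. f x = a + sa f * (x - a)"
    using germ_a[OF f(1)] by blast
  have "sb f \<noteq> 1" using F1[OF f(1)] f(2) by auto
  define gb where "gb = (if sb f > 1 then f else inv f)"
  have gb: "gb \<in> H" unfolding gb_def using f(1) H_inv by auto
  have kb: "sb gb > 1"
  proof (cases "sb f > 1")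
    case True then show ?thesis unfolding gb_def by simp
  next
    case False
    then have "sb f < 1" using \<open>sb f \<noteq> 1\<close> by simp
    then show ?thesis unfolding gb_def using False sb_inv[OF f(1)] sb_pos[OF f(1)] by simp
  qed
  obtain \<epsilon>b where eb: "\<epsilon>b > 0" "\<epsilon>b \<le> (b-a)/2" "\<forall>x\<in>{b-\<epsilon>b..b}. gb x = b + sb gb * (x - b)"
    using germ_b[OF gb] by blast
  define u where "u = a + \<epsilon>a/2"
  have u: "a < u" "u < b" "u < a + \<epsilon>a" using ea ab unfolding u_def by auto
  obtain F where F: "F \<in> H" "b - \<epsilon>b < F u" using orbit_up[of u "b - \<epsilon>b"] u eb ab by auto
  have "0 \<le> u" "u < 1" using u ab by auto
  then obtain \<delta>u s c where Fg: "\<delta>u > 0" "s > 0" "\<forall>x\<in>{u..u+\<delta>u}. F x = s * x + c"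
    using PLo_rgerm[OF H_PLo[OF F(1)]] by blast
  define v where "v = min (u + \<delta>u) (a + \<epsilon>a)"
  have v: "u < v" "v \<le> a + \<epsilon>a" "v \<le> u + \<delta>u" using Fg u unfolding v_def by auto
  define r where "r = (v - a) / (u - a)"
  have r1: "r > 1" using u v unfolding r_def by simp
  have "min r (sa f) > 1" using r1 f(2) by simp
  then obtain h where h: "h \<in> H" "1 < sa h" "sa h < min r (sa f)" using small by blast
  define h' where "h' = (if sb h \<le> sb gb then h else inv h)"
  have h'H: "h' \<in> H" unfolding h'_def using h(1) H_inv by auto
  have h'b: "sb h' \<le> sb gb"
  proof (cases "sb h \<le> sb gb")
    case True then show ?thesis unfolding h'_def by simp
  next
    case False
    then have "sb h > 1" using kb by simp
    then have "1 / sb h < 1" by simp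
    then have "sb (inv h) \<le> sb gb" using sb_inv[OF h(1)] kb by linarith
    then show ?thesis unfolding h'_def using False by simp
  qed
  define \<mu> where "\<mu> = sa h'"
  have h3: "sa h < r" "sa h < sa f" using h(3) by auto
  have i1: "1 / sa h < 1" using h(2) by simp
  have mu_cases: "\<mu> = sa h \<or> \<mu> = 1 / sa h" unfolding \<mu>_def h'_def
    by (cases "sb h \<le> sb gb") (simp_all add: sa_inv[OF h(1)])
  have h'a: "sa h' \<le> sa f" using mu_cases h3 f(2) i1 unfolding \<mu>_def by auto
  have mu1: "\<mu> \<noteq> 1" using mu_cases h(2) i1 by auto
  have mur: "\<mu> < r" "1 / \<mu> < r"
  proof -
    show "\<mu> < r" using mu_cases h3 i1 r1 by auto
    show "1 / \<mu> < r"
    proof (cases "\<mu> = sa h")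
      case True then show ?thesis using i1 r1 by simp
    next
      case False then have "\<mu> = 1 / sa h" using mu_cases by blast
      then show ?thesis using h3 by simp
    qed
  qed
  have mupos: "\<mu> > 0" unfolding \<mu>_def using sa_pos[OF h'H] .
  have Ea: "\<forall>x\<in>{a..a+\<epsilon>a}. h' x = a + \<mu> * (x - a)"
    unfolding \<mu>_def by (rule ext_a[OF f ea(1) ea(3) _ h'H h'a]) (use commp[OF h'H f(1)] in auto)
  have Eb: "\<forall>x\<in>{b-\<epsilon>b..b}. h' x = b + sb h' * (x - b)"
    by (rule ext_b[OF gb kb eb(1) eb(3) _ h'H h'b]) (use commp[OF h'H gb] in auto)
  have key: "s*(a + \<mu>*(t - a)) + c = b + sb h'*(s*t + c - b)"
    if t: "u \<le> t" "t \<le> v" "u \<le> a + \<mu>*(t - a)" "a + \<mu>*(t - a) \<le> v" for t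
  proof -
    have "t \<in> {a..a+\<epsilon>a}" using t u v by auto
    then have ht: "h' t = a + \<mu>*(t - a)" using Ea by blast
    have "F (h' t) = s*(a + \<mu>*(t - a)) + c" using ht Fg(3) t v by auto
    moreover have Ft: "F t = s*t + c" using Fg(3) t v by auto
    have "F u \<le> F t" using PLo_le_iff[OF H_PLo[OF F(1)]] t by blast
    moreover have "F t \<le> F b" using PLo_le_iff[OF H_PLo[OF F(1)]] t v u ea ab by auto
    ultimately have "F t \<in> {b-\<epsilon>b..b}" using F(2) H_fb[OF F(1)] by auto
    then have "h' (F t) = b + sb h'*(F t - b)" using Eb by blast
    moreover have "F (h' t) = h' (F t)" using commp[OF F(1) h'H] by simp
    ultimately show ?thesis using Ft \<open>F (h' t) = s*(a + \<mu>*(t - a)) + c\<close> by simp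
  qed
  have Fu: "s*u + c < b" using Fg(3) H_maps(2)[OF F(1) u(1,2)] Fg(1) by auto
  have ua: "u - a > 0" "v - a > 0" using u v by auto
  have mrP: "\<mu> * (u - a) < v - a" using mur(1) ua unfolding r_def by (simp add: pos_less_divide_eq)
  have mrQ: "u - a < \<mu> * (v - a)"
  proof -
    have "1 / \<mu> < (v - a) / (u - a)" using mur(2) unfolding r_def .
    then have "(u - a) / \<mu> < v - a" using ua by (simp add: pos_less_divide_eq)
    then show ?thesis using mupos by (simp add: pos_divide_less_eq mult.commute)
  qed
  obtain t1 t2 where tt: "t1 \<noteq> t2"
    "\<forall>t\<in>{t1,t2}. u - a \<le> t \<and> t \<le> v - a \<and> u - a \<le> \<mu>*t \<and> \<mu>*t \<le> v - a"
  proof -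
    have "u - a < v - a" using u v by simp
    then show ?thesis using two_points[OF ua(1) _ mupos mu1 mrP mrQ] that by blast
  qed
  have kk: "s*(a + \<mu>*((a + t) - a)) + c = b + sb h'*(s*(a + t) + c - b)" if "t \<in> {t1,t2}" for t
  proof -
    have c: "u - a \<le> t" "t \<le> v - a" "u - a \<le> \<mu>*t" "\<mu>*t \<le> v - a" using tt(2) that by blast+
    have e: "(a + t) - a = t" by simp
    have "u \<le> a + t" "a + t \<le> v" "u \<le> a + \<mu>*((a + t) - a)" "a + \<mu>*((a + t) - a) \<le> v"
      using c unfolding e by linarith+
    then show ?thesis by (rule key)
  qed
  have k1: "s*(a + \<mu>*((a + t1) - a)) + c = b + sb h'*(s*(a + t1) + c - b)" by (rule kk) simp
  have k2: "s*(a + \<mu>*((a + t2) - a)) + c = b + sb h'*(s*(a + t2) + c - b)" by (rule kk) simp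
  have "a + t1 \<noteq> a + t2" using tt(1) by simp
  then show False using alg_contra[OF Fg(2) mu1 _ u(1) Fu k1 k2] by blast
qed

end


context setting begin

lemma wpow:
  assumes w: "\<mu> \<ge> 1" "\<forall>x\<in>{a..a+\<delta>}. w x = a + \<mu> * (x - a)"
  shows "a \<le> x \<Longrightarrow> \<mu>^j * (x - a) \<le> \<delta> \<Longrightarrow> (w ^^ j) x = a + \<mu>^j * (x - a)"
proof (induction j)
  case 0 then show ?case by simp
next
  case (Suc j)
  have "\<mu>^j * (x - a) \<le> \<mu>^Suc j * (x - a)"
    using w(1) Suc.prems(1) by (intro mult_right_mono) (auto intro: power_increasing)
  then have "\<mu>^j * (x - a) \<le> \<delta>" using Suc.prems(2) by linarith
  then have e: "(w ^^ j) x = a + \<mu>^j * (x - a)" using Suc.IH Suc.prems(1) by blast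
  have "0 \<le> \<mu>^j * (x - a)" using w(1) Suc.prems(1) by simp
  then have "(w ^^ j) x \<in> {a..a+\<delta>}" using e \<open>\<mu>^j * (x - a) \<le> \<delta>\<close> by simp
  then have "w ((w ^^ j) x) = a + \<mu> * (\<mu>^j * (x - a))" using w(2) e by simp
  then show ?case by (simp add: mult.assoc)
qed

lemma chain_contra:
  assumes k2: "k2 \<in> H" and wH: "w \<in> H" and mu: "\<mu> > 1" and dw: "\<delta>w > 0"
    and wg: "\<forall>x\<in>{a..a+\<delta>w}. w x = a + \<mu> * (x - a)"
    and pp: "a < p" "p < p1" "p1 < q"
    and S1: "supp k2 \<subseteq> {p<..<q}" and S2: "{p<..<p1} \<subseteq> supp k2"
    and ratio: "\<mu> * (p - a) < p1 - a"
    and J1: "q - a < \<mu>^J * (p1 - a)" and J2: "\<mu>^J * (q - a) \<le> \<delta>w"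
  shows False
proof -
  define c where "c = (\<lambda>j. (w ^^ j) \<circ> k2 \<circ> inv (w ^^ j))"
  have cH: "c j \<in> H" for j unfolding c_def using H_conj[OF H_pow[OF wH] k2] .
  have suppc: "supp (c j) = (w ^^ j) ` supp k2" for j
    unfolding c_def by (rule supp_conj[OF H_PLo[OF H_pow[OF wH]]])
  have wj: "(w ^^ j) y = a + \<mu>^j * (y - a)" if "j \<le> J" "y \<in> supp k2" for j y
  proof -
    have y: "a < y" "y < q" using that S1 pp by auto
    have "\<mu>^j * (y - a) \<le> \<mu>^J * (y - a)"
      using y mu that(1) by (intro mult_right_mono power_increasing) auto
    also have "\<dots> \<le> \<mu>^J * (q - a)" using y mu by (intro mult_left_mono) auto
    finally have "\<mu>^j * (y - a) \<le> \<delta>w" using J2 by linarith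
    then show ?thesis using wpow[of \<mu> \<delta>w w y j] mu wg y by auto
  qed
  define V where "V = (\<Union>j\<in>{..J}. supp (c j))"
  have Vgt: "V \<subseteq> {p<..}"
  proof
    fix z assume "z \<in> V"
    then obtain j y where jy: "j \<le> J" "y \<in> supp k2" "z = (w ^^ j) y" unfolding V_def suppc by auto
    then have z: "z = a + \<mu>^j * (y - a)" using wj by simp
    have "1 \<le> \<mu>^j" using mu by simp
    moreover have "y > a" using jy S1 pp by auto
    ultimately have "0 \<le> (\<mu>^j - 1) * (y - a)" by simp
    then have "y - a \<le> \<mu>^j * (y - a)" by (simp add: algebra_simps)
    then show "z \<in> {p<..}" using z jy S1 by auto
  qed
  have V01: "V \<subseteq> {0..1}" unfolding V_def supp_def by auto
  define Ps where "Ps = a + \<mu>^J * (p1 - a)"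
  have Psq: "q < Ps" using J1 unfolding Ps_def by simp
  have chain: "{p<..<Ps} \<subseteq> V"
  proof
    fix z assume z: "z \<in> {p<..<Ps}"
    define P where "P = (\<lambda>j. z < a + \<mu>^j * (p1 - a))"
    have PJ: "P J" using z unfolding P_def Ps_def by simp
    define j where "j = (LEAST j. P j)"
    have Pj: "P j" unfolding j_def using LeastI[of P J] PJ by blast
    have jJ: "j \<le> J" unfolding j_def using Least_le[of P J] PJ by blast
    have low: "\<mu>^j * (p - a) < z - a"
    proof (cases j)
      case 0 then show ?thesis using z by simp
    next
      case (Suc i)
      then have "\<not> P i" unfolding j_def using not_less_Least[of i P] Suc j_def by auto
      then have "a + \<mu>^i * (p1 - a) \<le> z" unfolding P_def by simp
      moreover have "\<mu>^i * (\<mu> * (p - a)) < \<mu>^i * (p1 - a)" using ratio mu by simp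
      moreover have "\<mu>^j * (p - a) = \<mu>^i * (\<mu> * (p - a))" using Suc by (simp add: mult.commute mult.left_commute)
      ultimately show ?thesis by linarith
    qed
    have mjpos: "\<mu>^j > 0" using mu by simp
    define y where "y = a + (z - a) / \<mu>^j"
    have "p - a < (z - a) / \<mu>^j" using low mjpos by (simp add: pos_less_divide_eq mult.commute)
    moreover have "(z - a) / \<mu>^j < p1 - a" using Pj mjpos unfolding P_def by (simp add: pos_divide_less_eq mult.commute)
    ultimately have yS: "y \<in> supp k2" using S2 unfolding y_def by auto
    have "(w ^^ j) y = a + \<mu>^j * (y - a)" using wj[OF jJ yS] .
    also have "\<dots> = z" unfolding y_def using mjpos mu by simp
    finally have "z \<in> supp (c j)" using yS suppc by (metis image_eqI)
    then show "z \<in> V" unfolding V_def using jJ by blast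
  qed
  define G where "G = {g\<in>H. supp g \<subseteq> V}"
  have GH: "G \<subseteq> H" unfolding G_def by blast
  have Gsub: "PL_subgroup G"
    unfolding PL_subgroup_def
  proof (intro conjI ballI)
    show "G \<subseteq> Collect PLo" unfolding G_def using H_PLo by blast
    show "id \<in> G" unfolding G_def using H_id by simp
    fix f g assume "f \<in> G" "g \<in> G"
    then show "g \<circ> f \<in> G" unfolding G_def using H_comp supp_comp by blast
  next
    fix f assume "f \<in> G"
    then show "inv f \<in> G" unfolding G_def using H_inv supp_inv H_PLo by auto
  qed
  have cG: "c j \<in> G" if "j \<le> J" for j unfolding G_def V_def using cH that by blast
  have UG: "(\<Union>g\<in>G. supp g) = V"
  proof
    show "(\<Union>g\<in>G. supp g) \<subseteq> V" unfolding G_def by blast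
    show "V \<subseteq> (\<Union>g\<in>G. supp g)" unfolding V_def using cG by blast
  qed
  have c0: "c 0 = k2" unfolding c_def by (simp add: inv_id)
  have S2V: "supp k2 \<subseteq> V" unfolding V_def using c0 by force
  have k2G: "k2 \<in> G" unfolding G_def using k2 S2V by blast
  define x0 where "x0 = (p + p1) / 2"
  have x0: "x0 \<in> {p<..<p1}" using pp unfolding x0_def by auto
  have x0V: "x0 \<in> V" using x0 S2 S2V by blast
  define A where "A = connected_component_set V x0"
  have AG: "A \<in> group_orbitals G" unfolding group_orbitals_def A_def UG using x0V by blast
  have x0P: "x0 \<in> {p<..<Ps}" using x0 pp Psq by auto
  have PA: "{p<..<Ps} \<subseteq> A" unfolding A_def by (rule connected_component_maximal[OF x0P _ chain]) simp
  have AV: "A \<subseteq> V" unfolding A_def by (rule connected_component_subset)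
  have IA: "Inf A = p" using Inf_eq_left[of p Ps A] PA AV Vgt pp Psq by auto
  have SA: "Ps \<le> Sup A"
  proof -
    have "Sup {p<..<Ps} \<le> Sup A"
    proof (rule cSup_subset_mono)
      show "bdd_above A" using AV V01 by (intro bdd_aboveI[of _ 1]) auto
    qed (use PA pp Psq in auto)
    then show ?thesis using pp Psq by simp
  qed
  define B where "B = connected_component_set (supp k2) x0"
  have Bo: "B \<in> elem_orbitals k2" unfolding elem_orbitals_def B_def using x0 S2 by blast
  have BA: "B \<subseteq> A" unfolding B_def A_def by (rule connected_component_mono[OF S2V])
  have "{p<..<p1} \<subseteq> B" unfolding B_def by (rule connected_component_maximal[OF x0 _ S2]) simp
  moreover have "B \<subseteq> {p<..}" using connected_component_subset[of "supp k2" x0] S1 unfolding B_def by auto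
  ultimately have IB: "Inf B = p" using Inf_eq_left[of p p1 B] pp by auto
  have r1: "realizes k2 A (Inf A)" unfolding realizes_def IA using Bo BA IB by blast
  have r2: "\<not> realizes k2 A (Sup A)"
  proof
    assume "realizes k2 A (Sup A)"
    then obtain B' where B': "B' \<in> elem_orbitals k2" "Sup A = Inf B' \<or> Sup A = Sup B'"
      unfolding realizes_def by blast
    obtain x where x: "x \<in> supp k2" "B' = connected_component_set (supp k2) x"
      using B'(1) unfolding elem_orbitals_def by blast
    have xB: "x \<in> B'" using x by simp
    have B'S: "B' \<subseteq> {p<..<q}" using x connected_component_subset S1 by blast
    have "Inf B' \<le> x" by (rule cInf_lower[OF xB]) (rule bdd_belowI[of _ p], use B'S in auto)
    moreover have "Sup B' \<le> q" by (rule cSup_least) (use xB B'S in auto)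
    moreover have "x < q" using xB B'S by auto
    ultimately show False using B'(2) SA Psq by auto
  qed
  have "PL_subgroup G \<and> G \<subseteq> H" using Gsub GH by blast
  then have "realizes k2 A (Inf A) \<longleftrightarrow> realizes k2 A (Sup A)"
    using bal AG k2G unfolding balanced_def by blast
  then show False using r1 r2 by blast
qed

end


context setting begin

lemma fpow:
  assumes f: "0 < lm" "lm \<le> 1" "\<forall>x\<in>{a..a+\<epsilon>}. f x = a + lm * (x - a)"
  shows "x \<in> {a..a+\<epsilon>} \<Longrightarrow> (f ^^ m) x = a + lm^m * (x - a)"
proof (induction m)
  case 0 then show ?case by simp
next
  case (Suc m)
  have e: "(f ^^ m) x = a + lm^m * (x - a)" using Suc by blast
  have "lm^m \<le> 1" using f by (simp add: power_le_one)
  then have "lm^m * (x - a) \<le> 1 * (x - a)" using Suc.prems by (intro mult_right_mono) auto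
  moreover have "0 \<le> lm^m * (x - a)" using Suc.prems f by simp
  ultimately have "(f ^^ m) x \<in> {a..a+\<epsilon>}" using e Suc.prems by auto
  then have "f ((f ^^ m) x) = a + lm * (lm^m * (x - a))" using f(3) e by simp
  then show ?case by (simp add: mult.assoc)
qed

lemma caseK:
  assumes k: "k \<in> H" "k \<noteq> id" "sa k = 1" "sb k = 1"
    and small: "\<forall>r>1. \<exists>h\<in>H. 1 < sa h \<and> sa h < r"
  shows False
proof -
  obtain \<delta>1 where d1: "\<delta>1 > 0" "\<delta>1 \<le> (b-a)/2" "\<forall>x\<in>{a..a+\<delta>1}. k x = a + sa k * (x - a)"
    using germ_a[OF k(1)] by blast
  obtain \<delta>2 where d2: "\<delta>2 > 0" "\<delta>2 \<le> (b-a)/2" "\<forall>x\<in>{b-\<delta>2..b}. k x = b + sb k * (x - b)"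
    using germ_b[OF k(1)] by blast
  have suppk: "supp k \<subseteq> {a+\<delta>1<..<b-\<delta>2}"
  proof
    fix y assume y: "y \<in> supp k"
    then have y1: "y \<in> {a<..<b}" "k y \<noteq> y" using supp_H[OF k(1)] unfolding supp_def by auto
    have "\<not> y \<le> a + \<delta>1" using d1(3) k(3) y1 by auto
    moreover have "\<not> y \<ge> b - \<delta>2" using d2(3) k(4) y1 by auto
    ultimately show "y \<in> {a+\<delta>1<..<b-\<delta>2}" by auto
  qed
  obtain x where "k x \<noteq> x" using k(2) by (auto simp: fun_eq_iff)
  then have "x \<in> supp k" using PLo_out[OF H_PLo[OF k(1)]] unfolding supp_def by blast
  then have kne: "supp k \<noteq> {}" by blast
  obtain h0 where h0: "h0 \<in> H" "1 < sa h0" "sa h0 < 2" using small by (metis one_less_numeral_iff semiring_norm(76))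
  define f where "f = inv h0"
  have fH: "f \<in> H" unfolding f_def using H_inv[OF h0(1)] .
  define lm where "lm = sa f"
  have lam: "0 < lm" "lm < 1" unfolding lm_def f_def using sa_inv[OF h0(1)] h0(2) by auto
  obtain \<epsilon>f where ef: "\<epsilon>f > 0" "\<epsilon>f \<le> (b-a)/2" "\<forall>x\<in>{a..a+\<epsilon>f}. f x = a + lm * (x - a)"
    using germ_a[OF fH] unfolding lm_def by blast
  obtain u where u: "u \<in> H" "u (b - \<delta>2) < a + \<epsilon>f"
    using orbit_down[of "b - \<delta>2" "a + \<epsilon>f"] d2 ef ab by auto
  define k1 where "k1 = u \<circ> k \<circ> inv u"
  have k1H: "k1 \<in> H" unfolding k1_def using H_conj[OF u(1) k(1)] .
  have S1: "supp k1 = u ` supp k" unfolding k1_def by (rule supp_conj[OF H_PLo[OF u(1)]])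
  define q where "q = u (b - \<delta>2)"
  define lo where "lo = u (a + \<delta>1)"
  have lo: "a < lo" unfolding lo_def using H_maps(1)[OF u(1), of "a + \<delta>1"] d1 ab by auto
  have S1sub: "supp k1 \<subseteq> {lo<..<q}"
  proof
    fix z assume "z \<in> supp k1"
    then obtain y where y: "y \<in> supp k" "z = u y" using S1 by auto
    then have "a + \<delta>1 < y" "y < b - \<delta>2" using suppk by auto
    then show "z \<in> {lo<..<q}" unfolding lo_def q_def y(2) using PLo_less[OF H_PLo[OF u(1)]] by auto
  qed
  have S1ne: "supp k1 \<noteq> {}" using S1 kne by auto
  have S1bdd: "bdd_below (supp k1)" using S1sub by (intro bdd_belowI[of _ lo]) auto
  define p where "p = Inf (supp k1)"
  have plo: "lo \<le> p" unfolding p_def using S1ne S1sub by (intro cInf_greatest) auto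
  have ple: "\<And>y. y \<in> supp k1 \<Longrightarrow> p \<le> y" unfolding p_def using S1bdd by (intro cInf_lower)
  obtain y0 where y0: "y0 \<in> supp k1" using S1ne by blast
  have pq: "p < q" using ple[OF y0] S1sub y0 by auto
  have pa: "a < p" using lo plo by simp
  have qb: "q < a + \<epsilon>f" using u(2) unfolding q_def .
  have p01: "0 < p" "p < 1" using pa pq qb ab ef by auto
  have notin: "k1 z = z" if "a < z" "z < p" for z
  proof -
    have "z \<notin> supp k1" using ple that(2) by force
    moreover have "z \<in> {0..1}" using that p01 ab by auto
    ultimately show ?thesis unfolding supp_def by auto
  qed
  have k1p: "k1 p = p"
  proof -
    obtain \<delta> m c where lg: "\<delta> > 0" "m > 0" "\<forall>x\<in>{p-\<delta>..p}. k1 x = m * x + c"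
      using PLo_lgerm[OF H_PLo[OF k1H] p01(1)] p01 by auto
    define \<delta>' where "\<delta>' = min \<delta> (p - a)"
    have d': "\<delta>' > 0" "\<delta>' \<le> \<delta>" "\<delta>' \<le> p - a" using lg pa unfolding \<delta>'_def by auto
    define z1 where "z1 = p - \<delta>'/2"
    define z2 where "z2 = p - \<delta>'/4"
    have "m * z1 + c = z1" using lg(3) notin[of z1] d' unfolding z1_def by auto
    moreover have "m * z2 + c = z2" using lg(3) notin[of z2] d' unfolding z2_def by auto
    moreover have "z1 \<noteq> z2" using d' unfolding z1_def z2_def by auto
    ultimately have "m = 1" "c = 0"
      by (smt (verit) mult_cancel_right2 right_diff_distrib)+
    then show ?thesis using lg by auto
  qed
  obtain \<eta> m c where rg: "\<eta> > 0" "p + \<eta> \<le> 1" "\<forall>x\<in>{p..p+\<eta>}. k1 x = m * x + c"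
    using PLo_rgerm[OF H_PLo[OF k1H]] p01 by (meson less_imp_le)
  have cm: "c = p - m * p" using rg k1p by auto
  have m1: "m \<noteq> 1"
  proof
    assume "m = 1"
    then have idp: "k1 x = x" if "x \<in> {p..p+\<eta>}" for x using rg(3) cm that by auto
    have "p + \<eta> \<le> Inf (supp k1)"
    proof (rule cInf_greatest[OF S1ne])
      fix y assume y: "y \<in> supp k1"
      then have "p \<le> y" "k1 y \<noteq> y" using ple unfolding supp_def by auto
      then show "p + \<eta> \<le> y" using idp by force
    qed
    then show False using rg unfolding p_def[symmetric] by simp
  qed
  define p1 where "p1 = p + \<eta>"
  have pin: "x \<in> supp k1" if "p < x" "x \<le> p1" for x
  proof -
    have "k1 x = m * x + c" using rg(3) that unfolding p1_def by auto
    then have "k1 x - x = (m - 1) * (x - p)" using cm by (simp add: algebra_simps)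
    moreover have "(m - 1) * (x - p) \<noteq> 0" using m1 that by simp
    moreover have "x \<in> {0..1}" using that rg p01 unfolding p1_def by auto
    ultimately show ?thesis unfolding supp_def by auto
  qed
  have pp1: "p < p1" using rg unfolding p1_def by simp
  have p1q: "p1 < q" using pin[of p1] pp1 S1sub by auto
  have S1pq: "supp k1 \<subseteq> {p<..<q}"
  proof
    fix y assume y: "y \<in> supp k1"
    then have "p \<le> y" "y < q" using ple S1sub by auto
    moreover have "y \<noteq> p" using y k1p unfolding supp_def by auto
    ultimately show "y \<in> {p<..<q}" by auto
  qed
  have S1p1: "{p<..<p1} \<subseteq> supp k1" using pin by auto
  define r where "r = (p1 - a) / (p - a)"
  have r1: "r > 1" unfolding r_def using pa pp1 by simp
  obtain w where w: "w \<in> H" "1 < sa w" "sa w < r" using small r1 by blast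
  define \<mu> where "\<mu> = sa w"
  obtain \<delta>w where dw: "\<delta>w > 0" "\<forall>x\<in>{a..a+\<delta>w}. w x = a + \<mu> * (x - a)"
    using germ_a[OF w(1)] unfolding \<mu>_def by blast
  have mu: "\<mu> > 1" using w unfolding \<mu>_def by simp
  have ratio: "\<mu> * (p - a) < p1 - a" using w(3) pa unfolding \<mu>_def r_def by (simp add: pos_less_divide_eq)
  define C where "C = \<mu> * (q - a) * (q - a) / (p1 - a)"
  have Cpos: "C > 0" unfolding C_def using mu pa pp1 p1q by simp
  obtain m where mlam: "lm^m < \<delta>w / C" using real_arch_pow_inv[of "\<delta>w / C" lm] dw Cpos lam by auto
  define LL where "LL = lm^m"
  have Lpos: "LL > 0" unfolding LL_def using lam by simp
  have LC: "LL * C < \<delta>w" using mlam Cpos unfolding LL_def by (simp add: pos_less_divide_eq)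
  define fm where "fm = f ^^ m"
  have fmH: "fm \<in> H" unfolding fm_def using H_pow[OF fH] .
  have fmx: "fm x = a + LL * (x - a)" if "x \<in> {a..a+\<epsilon>f}" for x
    unfolding fm_def LL_def using fpow[of lm \<epsilon>f f x m] lam ef that by auto
  define k2 where "k2 = fm \<circ> k1 \<circ> inv fm"
  have k2H: "k2 \<in> H" unfolding k2_def using H_conj[OF fmH k1H] .
  have S2: "supp k2 = fm ` supp k1" unfolding k2_def by (rule supp_conj[OF H_PLo[OF fmH]])
  define p' where "p' = a + LL * (p - a)"
  define p1' where "p1' = a + LL * (p1 - a)"
  define q' where "q' = a + LL * (q - a)"
  have S2sub: "supp k2 \<subseteq> {p'<..<q'}"
  proof
    fix z assume "z \<in> supp k2"
    then obtain y where y: "y \<in> supp k1" "z = fm y" using S2 by auto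
    then have yy: "p < y" "y < q" using S1pq by auto
    then have "z = a + LL * (y - a)" using fmx[of y] y pa qb by auto
    then show "z \<in> {p'<..<q'}" unfolding p'_def q'_def using yy Lpos by auto
  qed
  have S2p1: "{p'<..<p1'} \<subseteq> supp k2"
  proof
    fix z assume z: "z \<in> {p'<..<p1'}"
    define y where "y = a + (z - a) / LL"
    have "p - a < (z - a) / LL" using z Lpos unfolding p'_def by (simp add: pos_less_divide_eq mult.commute)
    moreover have "(z - a) / LL < p1 - a" using z Lpos unfolding p1'_def by (simp add: pos_divide_less_eq mult.commute)
    ultimately have yS: "y \<in> supp k1" using S1p1 unfolding y_def by auto
    have "fm y = a + LL * (y - a)" using fmx[of y] yS S1pq pa qb by auto
    also have "\<dots> = z" unfolding y_def using Lpos by simp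
    finally show "z \<in> supp k2" using S2 yS by (metis image_eqI)
  qed
  have pp': "a < p'" "p' < p1'" "p1' < q'" unfolding p'_def p1'_def q'_def using Lpos pa pp1 p1q by auto
  have ratio': "\<mu> * (p' - a) < p1' - a" unfolding p'_def p1'_def using ratio Lpos
    by (simp add: mult.left_commute)
  obtain n where n: "(q' - a) / (p1' - a) < \<mu>^n" using real_arch_pow[OF mu] by blast
  define P where "P = (\<lambda>n. q' - a < \<mu>^n * (p1' - a))"
  have Pn: "P n" using n pp' unfolding P_def by (simp add: pos_divide_less_eq)
  define J where "J = (LEAST n. P n)"
  have PJ: "P J" unfolding J_def using LeastI[of P n] Pn by blast
  have J0: "J \<noteq> 0"
  proof
    assume "J = 0"
    then have "q' - a < p1' - a" using PJ unfolding P_def by simp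
    then show False using pp' by simp
  qed
  then obtain i where Ji: "J = Suc i" by (cases J) auto
  have "\<not> P i" using not_less_Least[of i P] Ji unfolding J_def by auto
  then have mi: "\<mu>^i * (p1' - a) \<le> q' - a" unfolding P_def by simp
  have J2: "\<mu>^J * (q' - a) \<le> \<delta>w"
  proof -
    have qa: "q' - a = LL * (q - a)" "p1' - a = LL * (p1 - a)" unfolding q'_def p1'_def by auto
    have "\<mu>^i * (p1 - a) \<le> q - a" using mi Lpos unfolding qa by (simp add: mult.left_commute)
    then have mi': "\<mu>^i \<le> (q - a) / (p1 - a)" using pa pp1 by (simp add: pos_le_divide_eq)
    have "\<mu>^J * (q' - a) = \<mu>^i * (\<mu> * LL * (q - a))" unfolding Ji qa by (simp add: algebra_simps)
    also have "\<dots> \<le> (q - a) / (p1 - a) * (\<mu> * LL * (q - a))"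
      using mi' mu Lpos pa pq by (intro mult_right_mono) auto
    also have "\<dots> = LL * C" unfolding C_def by (simp add: mult_ac)
    finally show ?thesis using LC by linarith
  qed
  show False
    by (rule chain_contra[OF k2H w(1) mu dw(1) dw(2) pp' S2sub S2p1 ratio' _ J2])
       (use PJ in \<open>simp add: P_def\<close>)
qed

end


lemma cyclic_lemma:
  fixes \<Gamma> :: "(real \<times> real) set"
  assumes z: "(0,0) \<in> \<Gamma>"
    and add: "\<forall>x\<in>\<Gamma>. \<forall>y\<in>\<Gamma>. (fst x + fst y, snd x + snd y) \<in> \<Gamma>"
    and neg: "\<forall>x\<in>\<Gamma>. (- fst x, - snd x) \<in> \<Gamma>"
    and inj: "\<forall>x\<in>\<Gamma>. fst x = 0 \<longrightarrow> snd x = 0"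
    and g0: "\<gamma> > 0" and disc: "\<forall>x\<in>\<Gamma>. \<not> (0 < fst x \<and> fst x < \<gamma>)"
  shows "\<Gamma> = {(0,0)} \<or> (\<exists>\<psi> :: real \<times> real \<Rightarrow> int. bij_betw \<psi> \<Gamma> UNIV \<and>
          (\<forall>x\<in>\<Gamma>. \<forall>y\<in>\<Gamma>. \<psi> (fst x + fst y, snd x + snd y) = \<psi> x + \<psi> y))"
proof (cases "\<Gamma> \<subseteq> {(0,0)}")
  case True then show ?thesis using z by blast
next
  case False
  then obtain x where x: "x \<in> \<Gamma>" "x \<noteq> (0,0)" by blast
  then have "fst x \<noteq> 0" using inj by (metis prod.collapse)
  then obtain x1 where x1: "x1 \<in> \<Gamma>" "fst x1 > 0"
  proof (cases "fst x > 0")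
    case True then show ?thesis using that x by blast
  next
    case False
    then have "fst (- fst x, - snd x) > 0" using \<open>fst x \<noteq> 0\<close> by simp
    then show ?thesis using that neg x by blast
  qed
  have sub: "\<forall>x\<in>\<Gamma>. \<forall>y\<in>\<Gamma>. (fst x - fst y, snd x - snd y) \<in> \<Gamma>"
  proof (intro ballI)
    fix x y assume "x \<in> \<Gamma>" "y \<in> \<Gamma>"
    then have "(- fst y, - snd y) \<in> \<Gamma>" using neg by blast
    then have "(fst x + fst (- fst y, - snd y), snd x + snd (- fst y, - snd y)) \<in> \<Gamma>" using add \<open>x \<in> \<Gamma>\<close> by blast
    then show "(fst x - fst y, snd x - snd y) \<in> \<Gamma>" by simp
  qed
  define Pos where "Pos = fst ` {x\<in>\<Gamma>. fst x > 0}"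
  have Pne: "Pos \<noteq> {}" unfolding Pos_def using x1 by blast
  have Pbdd: "bdd_below Pos" unfolding Pos_def by (intro bdd_belowI[of _ 0]) auto
  have Pge: "\<forall>t\<in>Pos. \<gamma> \<le> t" unfolding Pos_def using disc by force
  define g where "g = Inf Pos"
  have gge: "\<gamma> \<le> g" unfolding g_def using Pne Pge by (intro cInf_greatest) auto
  have gP: "g \<in> Pos"
  proof (rule ccontr)
    assume ng: "g \<notin> Pos"
    obtain t1 where t1: "t1 \<in> Pos" "t1 < g + \<gamma>" using cInf_lessD[OF Pne, of "g + \<gamma>"] g0 unfolding g_def by auto
    have "g \<le> t1" unfolding g_def using t1(1) Pbdd by (rule cInf_lower)
    then have "g < t1" using ng t1(1) by (cases "g = t1") auto
    then obtain t2 where t2: "t2 \<in> Pos" "t2 < t1" using cInf_lessD[OF Pne, of t1] unfolding g_def by auto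
    have "g \<le> t2" unfolding g_def using t2(1) Pbdd by (rule cInf_lower)
    obtain y1 where y1: "y1 \<in> \<Gamma>" "fst y1 = t1" using t1(1) unfolding Pos_def by auto
    obtain y2 where y2: "y2 \<in> \<Gamma>" "fst y2 = t2" using t2(1) unfolding Pos_def by auto
    have "(fst y1 - fst y2, snd y1 - snd y2) \<in> \<Gamma>" using sub y1 y2 by blast
    moreover have "0 < t1 - t2" "t1 - t2 < \<gamma>" using t2 t1 \<open>g \<le> t2\<close> by auto
    ultimately show False using disc y1 y2 by fastforce
  qed
  obtain e where e: "e \<in> \<Gamma>" "fst e = g" using gP unfolding Pos_def by auto
  have gpos: "g > 0" using gge g0 by simp
  define mul where "mul = (\<lambda>n::int. (of_int n * fst e, of_int n * snd e))"
  have mulnat: "mul (int n) \<in> \<Gamma>" for n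
  proof (induction n)
    case 0 then show ?case using z unfolding mul_def by simp
  next
    case (Suc n)
    have "(fst (mul (int n)) + fst e, snd (mul (int n)) + snd e) \<in> \<Gamma>" using add Suc e by blast
    then show ?case unfolding mul_def by (simp add: algebra_simps)
  qed
  have mulG: "mul n \<in> \<Gamma>" for n
  proof (cases "n \<ge> 0")
    case True then show ?thesis using mulnat[of "nat n"] by simp
  next
    case False
    then have "mul (int (nat (- n))) \<in> \<Gamma>" using mulnat by blast
    then have "(- fst (mul (int (nat (- n)))), - snd (mul (int (nat (- n))))) \<in> \<Gamma>" using neg by blast
    moreover have "int (nat (- n)) = - n" using False by simp
    ultimately show ?thesis unfolding mul_def by simp
  qed
  define \<psi> where "\<psi> = (\<lambda>x::real \<times> real. \<lfloor>fst x / g\<rfloor>)"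
  have repr: "x = mul (\<psi> x)" if x: "x \<in> \<Gamma>" for x
  proof -
    define n where "n = \<psi> x"
    define y where "y = (fst x - fst (mul n), snd x - snd (mul n))"
    have yG: "y \<in> \<Gamma>" unfolding y_def using sub x mulG by blast
    have fy: "fst y = fst x - of_int n * g" unfolding y_def mul_def e(2) by simp
    have "of_int n \<le> fst x / g" "fst x / g < of_int n + 1" unfolding n_def \<psi>_def by linarith+
    then have "of_int n * g \<le> fst x" "fst x < of_int n * g + g" using gpos
      by (simp_all add: pos_le_divide_eq pos_divide_less_eq algebra_simps)
    then have fy1: "0 \<le> fst y" "fst y < g" using fy by auto
    have "fst y = 0"
    proof (rule ccontr)
      assume "fst y \<noteq> 0"
      then have "fst y \<in> Pos" unfolding Pos_def using yG fy1 by auto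
      then have "g \<le> fst y" unfolding g_def using Pbdd by (rule cInf_lower)
      then show False using fy1 by simp
    qed
    then have "snd y = 0" using inj yG by blast
    then show ?thesis using \<open>fst y = 0\<close> unfolding y_def n_def by (simp add: prod_eq_iff)
  qed
  have psimul: "\<psi> (mul n) = n" for n unfolding \<psi>_def mul_def e(2) using gpos by simp
  have "bij_betw \<psi> \<Gamma> UNIV"
    unfolding bij_betw_def
  proof
    show "inj_on \<psi> \<Gamma>" by (metis inj_onI repr)
    show "\<psi> ` \<Gamma> = UNIV"
    proof (rule set_eqI, rule iffI)
      fix n :: int assume "n \<in> UNIV"
      then show "n \<in> \<psi> ` \<Gamma>" using psimul mulG by (metis image_eqI)
    qed auto
  qed
  moreover have "\<forall>x\<in>\<Gamma>. \<forall>y\<in>\<Gamma>. \<psi> (fst x + fst y, snd x + snd y) = \<psi> x + \<psi> y"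
  proof (intro ballI)
    fix x y assume "x \<in> \<Gamma>" "y \<in> \<Gamma>"
    then have "x = mul (\<psi> x)" "y = mul (\<psi> y)" using repr by auto
    then have "(fst x + fst y, snd x + snd y) = mul (\<psi> x + \<psi> y)"
      unfolding mul_def by (metis (no_types, lifting) distrib_right fst_conv of_int_add snd_conv)
    then show "\<psi> (fst x + fst y, snd x + snd y) = \<psi> x + \<psi> y" using psimul by simp
  qed
  ultimately show ?thesis by blast
qed

context setting begin

lemma small_or_discrete: "\<exists>\<gamma>>0. \<forall>h\<in>H. \<not> (0 < ln (sa h) \<and> ln (sa h) < \<gamma>)"
proof (rule ccontr)
  assume "\<not> ?thesis"
  then have sm0: "\<forall>\<gamma>>0. \<exists>h\<in>H. 0 < ln (sa h) \<and> ln (sa h) < \<gamma>" by auto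
  have small: "\<forall>r>1. \<exists>h\<in>H. 1 < sa h \<and> sa h < r"
  proof (intro allI impI)
    fix r :: real assume "r > 1"
    then have "ln r > 0" by simp
    then obtain h where h: "h \<in> H" "0 < ln (sa h)" "ln (sa h) < ln r" using sm0 by blast
    have "1 < sa h" using h(2) sa_pos[OF h(1)] by (simp add: ln_gt_zero_iff)
    moreover have "sa h < r" using h(3) sa_pos[OF h(1)] \<open>r > 1\<close> by simp
    ultimately show "\<exists>h\<in>H. 1 < sa h \<and> sa h < r" using h(1) by blast
  qed
  show False
  proof (cases "\<exists>k\<in>H. k \<noteq> id \<and> sa k = 1 \<and> sb k = 1")
    case True
    then obtain k where "k \<in> H" "k \<noteq> id" "sa k = 1" "sb k = 1" by blast
    then show False using caseK small by blast
  next
    case False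
    have comm: "\<forall>f\<in>H. \<forall>g\<in>H. f \<circ> g = g \<circ> f"
    proof (intro ballI)
      fix f g assume f: "f \<in> H" and g: "g \<in> H"
      define x where "x = (f \<circ> g) \<circ> inv (g \<circ> f)"
      have gf: "g \<circ> f \<in> H" using H_comp[OF f g] .
      have fg: "f \<circ> g \<in> H" using H_comp[OF g f] .
      have xH: "x \<in> H" unfolding x_def using H_comp[OF H_inv[OF gf] fg] .
      have "sa x = sa (inv (g \<circ> f)) * sa (f \<circ> g)" unfolding x_def using sa_comp[OF H_inv[OF gf] fg] .
      also have "\<dots> = 1" using sa_inv[OF gf] sa_comp[OF f g] sa_comp[OF g f] sa_pos[OF f] sa_pos[OF g] by simp
      finally have sax: "sa x = 1" .
      have "sb x = sb (inv (g \<circ> f)) * sb (f \<circ> g)" unfolding x_def using sb_comp[OF H_inv[OF gf] fg] .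
      also have "\<dots> = 1" using sb_inv[OF gf] sb_comp[OF f g] sb_comp[OF g f] sb_pos[OF f] sb_pos[OF g] by simp
      finally have sbx: "sb x = 1" .
      have "x = id" using False xH sax sbx by blast
      then have "x \<circ> (g \<circ> f) = g \<circ> f" by simp
      moreover have "x \<circ> (g \<circ> f) = f \<circ> g" unfolding x_def using inv_comp_id[OF gf] by (simp add: comp_assoc)
      ultimately show "f \<circ> g = g \<circ> f" by simp
    qed
    show False using caseA[OF comm small] .
  qed
qed

lemma main:
  assumes phi: "\<And>h. \<phi> h = (ln (right_deriv h a), ln (left_deriv h b))"
  shows "(\<forall>f\<in>H. \<forall>g\<in>H. \<phi> (g \<circ> f) = (fst (\<phi> f) + fst (\<phi> g), snd (\<phi> f) + snd (\<phi> g)))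
    \<and> (\<phi> ` H = {(0, 0)} \<or>
       (\<exists>\<psi> :: real \<times> real \<Rightarrow> int. bij_betw \<psi> (\<phi> ` H) UNIV \<and>
          (\<forall>x\<in>\<phi> ` H. \<forall>y\<in>\<phi> ` H. \<psi> (fst x + fst y, snd x + snd y) = \<psi> x + \<psi> y)))"
proof -
  have phi': "\<phi> h = (ln (sa h), ln (sb h))" for h using phi unfolding sa_def sb_def by simp
  have hom: "\<phi> (g \<circ> f) = (fst (\<phi> f) + fst (\<phi> g), snd (\<phi> f) + snd (\<phi> g))" if "f \<in> H" "g \<in> H" for f g
    using sa_comp[OF that] sb_comp[OF that] sa_pos[OF that(1)] sa_pos[OF that(2)]
      sb_pos[OF that(1)] sb_pos[OF that(2)] unfolding phi' by (simp add: ln_mult)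
  have z: "(0,0) \<in> \<phi> ` H"
  proof -
    have "\<phi> id = (0,0)" unfolding phi' sa_id sb_id by simp
    then show ?thesis using H_id by (metis image_eqI)
  qed
  have add: "\<forall>x\<in>\<phi> ` H. \<forall>y\<in>\<phi> ` H. (fst x + fst y, snd x + snd y) \<in> \<phi> ` H"
  proof (intro ballI)
    fix x y assume "x \<in> \<phi> ` H" "y \<in> \<phi> ` H"
    then obtain f g where "f \<in> H" "g \<in> H" "x = \<phi> f" "y = \<phi> g" by blast
    then show "(fst x + fst y, snd x + snd y) \<in> \<phi> ` H" using hom H_comp by (metis image_eqI)
  qed
  have neg: "\<forall>x\<in>\<phi> ` H. (- fst x, - snd x) \<in> \<phi> ` H"
  proof
    fix x assume "x \<in> \<phi> ` H"
    then obtain f where f: "f \<in> H" "x = \<phi> f" by blast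
    have "\<phi> (inv f) = (- fst x, - snd x)" unfolding f(2) phi'
      using sa_inv[OF f(1)] sb_inv[OF f(1)] sa_pos[OF f(1)] sb_pos[OF f(1)] by (simp add: ln_div)
    then show "(- fst x, - snd x) \<in> \<phi> ` H" using H_inv[OF f(1)] by (metis image_eqI)
  qed
  have inj: "\<forall>x\<in>\<phi> ` H. fst x = 0 \<longrightarrow> snd x = 0"
  proof (intro ballI impI)
    fix x assume "x \<in> \<phi> ` H" "fst x = 0"
    then obtain f where f: "f \<in> H" "x = \<phi> f" by blast
    then have "ln (sa f) = 0" using \<open>fst x = 0\<close> unfolding phi' by simp
    then have "sa f = 1" using sa_pos[OF f(1)] by simp
    then have "sb f = 1" using F1[OF f(1)] by simp
    then show "snd x = 0" unfolding f(2) phi' by simp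
  qed
  obtain \<gamma> where g: "\<gamma> > 0" "\<forall>h\<in>H. \<not> (0 < ln (sa h) \<and> ln (sa h) < \<gamma>)" using small_or_discrete by blast
  have disc: "\<forall>x\<in>\<phi> ` H. \<not> (0 < fst x \<and> fst x < \<gamma>)" using g(2) unfolding phi' by auto
  show ?thesis using hom cyclic_lemma[OF z add neg inj g(1) disc] by blast
qed

end

theorem lemma9:
  fixes H :: "(real \<Rightarrow> real) set" and a b :: real
    and \<phi> :: "(real \<Rightarrow> real) \<Rightarrow> real \<times> real"
  assumes "PL_subgroup H" and "balanced H"
    and "group_orbitals H = {{a<..<b}}"
    and "\<And>h. \<phi> h = (ln (right_deriv h a), ln (left_deriv h b))"
  shows "(\<forall>f\<in>H. \<forall>g\<in>H. \<phi> (g \<circ> f) = (fst (\<phi> f) + fst (\<phi> g), snd (\<phi> f) + snd (\<phi> g)))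
    \<and> (\<phi> ` H = {(0, 0)} \<or>
       (\<exists>\<psi> :: real \<times> real \<Rightarrow> int. bij_betw \<psi> (\<phi> ` H) UNIV \<and>
          (\<forall>x\<in>\<phi> ` H. \<forall>y\<in>\<phi> ` H. \<psi> (fst x + fst y, snd x + snd y) = \<psi> x + \<psi> y)))"
proof -
  interpret setting H a b using assms(1-3) by unfold_locales
  show ?thesis using main[OF assms(4)] by blast
qed


end
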